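(* The class of ParalESN models with the Echo State Property, endowed with an MLP readout, is universal in the family of causal, time-invariant filters with the fading memory property: for any such filter $\mathcal{U}$ (on uniformly bounded input sequences) and any $\epsilon > 0$, there exists a ParalESN with diagonal transition matrix $\bar\Lambda_{\mathrm{h}}$ satisfying $|\lambda_i|<1$ for all diagonal entries and an MLP readout $f_{\mathrm{out}}$ whose induced filter $\mathcal{U}_{\mathrm{ParalESN}}$ satisfies $\sup_{\overleftarrow{x}} \|\mathcal{U}(\overleftarrow{x}) - \mathcal{U}_{\mathrm{ParalESN}}(\overleftarrow{x})\|_\infty < \epsilon$, the supremum being over the admissible (uniformly bounded) input sequences.
   Context: ParalESN: state recurrence $h_t = \bar{\Lambda}_{\mathrm{h}} h_{t-1} + \tau(W_{\mathrm{in}} x_t + b)$ with $\bar{\Lambda}_{\mathrm{h}}=\mathrm{diag}(\lambda_1,\dots,\lambda_{N_{\mathrm{h}}})\in\mathbb{C}^{N_{\mathrm{h}}\times N_{\mathrm{h}}}$, $W_{\mathrm{in}}\in\mathbb{C}^{N_{\mathrm{h}}\times N_{\mathrm{in}}}$, $b\in\mathbb{C}^{N_{\mathrm{h}}}$, $\tau\in(0,1]$, and output $y_t = f_{\mathrm{out}}(h_t)$ with $f_{\mathrm{out}}$ an MLP. The Echo State Property (ESP): for every input sequence and every two initial states, the resulting state sequences satisfy $\|h_t-h'_t\|_2\to 0$; when it holds, the system defines a filter mapping semi-infinite input sequences $(x_i)_{i\in\mathbb{Z}_-}$ to output sequences $(y_i)_{i\in\mathbb{Z}_-}$. A filter $\mathcal{U}:(\mathbb{R}^{N_x})^{\mathbb{Z}_-}\to(\mathbb{R}^{N_y})^{\mathbb{Z}_-}$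 is causal if $\mathcal{U}(\overleftarrow{x})_t$ depends only on $(x_s)_{s\le t}$; it is time-invariant if it commutes with every time shift $\mathcal{T}_\tau(\overleftarrow{x})_t = x_{t-\tau}$, $\tau>0$. For a weighting sequence $w\in(0,1]^{\mathbb{Z}_-}$ with $w_i\to 0$ as $i\to-\infty$, the weighted norm is $\|\overleftarrow{v}\|_w = \sup_{i\in\mathbb{Z}_-} w_{-i}\|v_i\|$ (i.e. the sup-norm of $w\odot\overleftarrow v$); $\|\overleftarrow v\|_\infty=\sup_i\|v_i\|$. $\mathcal{U}$ has the fading memory property if it is continuous with respect to the metric induced by $\|\cdot\|_w$ for some such weighting sequence: for every $\overleftarrow{x}_1$ and $\epsilon>0$ there is $\delta>0$ with $\|\overleftarrow{x}_1-\overleftarrow{x}_2\|_w<\delta \Rightarrow \|\mathcal{U}(\overleftarrow{x}_1)-\mathcal{U}(\overleftarrow{x}_2)\|_w<\epsilon$. *)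

theory Defs
  imports "HOL-Analysis.Analysis"
begin

text \<open>A semi-infinite sequence indexed by Z_- is represented as a function
  on nat: v k stands for v_{-k}. The time shift T_tau (v)_t = v_{t-tau} becomes
  (T_tau v) k = v (k + tau).
  ParalESN states live in C^N, represented as nat => complex (entries i >= N are 0).\<close>

definition bounded_seqs :: "real \<Rightarrow> (nat \<Rightarrow> 'a::real_normed_vector) set" where
  "bounded_seqs M = {x. \<forall>k. norm (x k) \<le> M}"

definition shift_seq :: "nat \<Rightarrow> (nat \<Rightarrow> 'a) \<Rightarrow> (nat \<Rightarrow> 'a)" where
  "shift_seq tau v = (\<lambda>k. v (k + tau))"

definition causal_filter ::
  "real \<Rightarrow> ((nat \<Rightarrow> 'a::real_normed_vector) \<Rightarrow> (nat \<Rightarrow> 'b)) \<Rightarrow> bool" where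
  "causal_filter M U \<longleftrightarrow>
     (\<forall>x\<in>bounded_seqs M. \<forall>y\<in>bounded_seqs M. \<forall>k.
        (\<forall>j\<ge>k. x j = y j) \<longrightarrow> U x k = U y k)"

definition time_invariant_filter ::
  "real \<Rightarrow> ((nat \<Rightarrow> 'a::real_normed_vector) \<Rightarrow> (nat \<Rightarrow> 'b)) \<Rightarrow> bool" where
  "time_invariant_filter M U \<longleftrightarrow>
     (\<forall>x\<in>bounded_seqs M. \<forall>tau>0. U (shift_seq tau x) = shift_seq tau (U x))"

definition weighting_seq :: "(nat \<Rightarrow> real) \<Rightarrow> bool" where
  "weighting_seq w \<longleftrightarrow> (\<forall>k. 0 < w k \<and> w k \<le> 1) \<and> w \<longlonglongrightarrow> 0"

definition wnorm :: "(nat \<Rightarrow> real) \<Rightarrow> (nat \<Rightarrow> 'a::real_normed_vector) \<Rightarrow> ereal" where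
  "wnorm w v = (SUP k. ereal (w k * norm (v k)))"

definition supnorm :: "(nat \<Rightarrow> 'a::real_normed_vector) \<Rightarrow> ereal" where
  "supnorm v = (SUP k. ereal (norm (v k)))"

definition fading_memory ::
  "real \<Rightarrow> ((nat \<Rightarrow> 'a::real_normed_vector) \<Rightarrow> (nat \<Rightarrow> 'b::real_normed_vector)) \<Rightarrow> bool" where
  "fading_memory M U \<longleftrightarrow>
     (\<exists>w. weighting_seq w \<and>
        (\<forall>x1\<in>bounded_seqs M. \<forall>e>0. \<exists>d>0. \<forall>x2\<in>bounded_seqs M.
            wnorm w (\<lambda>k. x1 k - x2 k) < ereal d \<longrightarrow>
            wnorm w (\<lambda>k. U x1 k - U x2 k) < ereal e))"

definition cnorm2 :: "nat \<Rightarrow> (nat \<Rightarrow> complex) \<Rightarrow> real" where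
  "cnorm2 N h = sqrt (\<Sum>i<N. (cmod (h i))\<^sup>2)"

definition esn_drive ::
  "nat \<Rightarrow> (nat \<Rightarrow> 'm::finite \<Rightarrow> complex) \<Rightarrow> (nat \<Rightarrow> complex) \<Rightarrow> real \<Rightarrow> real^'m \<Rightarrow> nat \<Rightarrow> complex" where
  "esn_drive N Win b tau u = (\<lambda>i. if i < N then
       complex_of_real tau * ((\<Sum>j\<in>UNIV. Win i j * complex_of_real (u $ j)) + b i) else 0)"

fun esn_traj ::
  "nat \<Rightarrow> (nat \<Rightarrow> complex) \<Rightarrow> (nat \<Rightarrow> 'm::finite \<Rightarrow> complex) \<Rightarrow> (nat \<Rightarrow> complex) \<Rightarrow> real
   \<Rightarrow> (nat \<Rightarrow> real^'m) \<Rightarrow> (nat \<Rightarrow> complex) \<Rightarrow> nat \<Rightarrow> (nat \<Rightarrow> complex)" where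
  "esn_traj N lam Win b tau x h0 0 = h0"
| "esn_traj N lam Win b tau x h0 (Suc t) =
     (\<lambda>i. (if i < N then lam i * esn_traj N lam Win b tau x h0 t i else 0)
          + esn_drive N Win b tau (x (Suc t)) i)"

definition echo_state_property ::
  "nat \<Rightarrow> (nat \<Rightarrow> complex) \<Rightarrow> (nat \<Rightarrow> 'm::finite \<Rightarrow> complex) \<Rightarrow> (nat \<Rightarrow> complex) \<Rightarrow> real \<Rightarrow> bool" where
  "echo_state_property N lam Win b tau \<longleftrightarrow>
     (\<forall>(x :: nat \<Rightarrow> real^'m) h0 h0'.
        (\<lambda>t. cnorm2 N (\<lambda>i. esn_traj N lam Win b tau x h0 t i - esn_traj N lam Win b tau x h0' t i))
          \<longlonglongrightarrow> 0)"

text \<open>State sequence on Z_- (k stands for time -k): h_{-k} = Lambda h_{-k-1} + tau (W_in x_{-k} + b).\<close>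
definition esn_solution ::
  "nat \<Rightarrow> (nat \<Rightarrow> complex) \<Rightarrow> (nat \<Rightarrow> 'm::finite \<Rightarrow> complex) \<Rightarrow> (nat \<Rightarrow> complex) \<Rightarrow> real
   \<Rightarrow> (nat \<Rightarrow> real^'m) \<Rightarrow> (nat \<Rightarrow> nat \<Rightarrow> complex) \<Rightarrow> bool" where
  "esn_solution N lam Win b tau x h \<longleftrightarrow>
     (\<forall>k i. h k i = (if i < N then lam i * h (Suc k) i else 0) + esn_drive N Win b tau (x k) i)
     \<and> (\<exists>B. \<forall>k. cnorm2 N (h k) \<le> B)"

text \<open>The state filter induced by the ESN: the (unique) bounded state sequence on Z_-.\<close>
definition esn_states ::
  "nat \<Rightarrow> (nat \<Rightarrow> complex) \<Rightarrow> (nat \<Rightarrow> 'm::finite \<Rightarrow> complex) \<Rightarrow> (nat \<Rightarrow> complex) \<Rightarrow> real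
   \<Rightarrow> (nat \<Rightarrow> real^'m) \<Rightarrow> (nat \<Rightarrow> nat \<Rightarrow> complex)" where
  "esn_states N lam Win b tau x = (THE h. esn_solution N lam Win b tau x h)"

definition realify :: "nat \<Rightarrow> (nat \<Rightarrow> complex) \<Rightarrow> (nat \<Rightarrow> real)" where
  "realify N h = (\<lambda>i. if i < N then Re (h i) else if i < 2 * N then Im (h (i - N)) else 0)"

fun mlp_hidden :: "(real \<Rightarrow> real) \<Rightarrow> (nat \<times> (nat \<Rightarrow> nat \<Rightarrow> real) \<times> (nat \<Rightarrow> real)) list
    \<Rightarrow> (nat \<Rightarrow> real) \<Rightarrow> (nat \<Rightarrow> real)" where
  "mlp_hidden \<sigma> [] v = v"
| "mlp_hidden \<sigma> ((d, W, c) # Ls) v = mlp_hidden \<sigma> Ls (\<lambda>j. \<sigma> ((\<Sum>i<d. W j i * v i) + c j))"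

definition is_mlp :: "(real \<Rightarrow> real) \<Rightarrow> ((nat \<Rightarrow> real) \<Rightarrow> real^'n) \<Rightarrow> bool" where
  "is_mlp \<sigma> f \<longleftrightarrow>
     (\<exists>Ls d (A :: 'n \<Rightarrow> nat \<Rightarrow> real) (c :: real^'n).
        f = (\<lambda>v. (\<chi> k. (\<Sum>i<d. A k i * mlp_hidden \<sigma> Ls v i)) + c))"

definition paral_filter ::
  "nat \<Rightarrow> (nat \<Rightarrow> complex) \<Rightarrow> (nat \<Rightarrow> 'm::finite \<Rightarrow> complex) \<Rightarrow> (nat \<Rightarrow> complex) \<Rightarrow> real
   \<Rightarrow> ((nat \<Rightarrow> real) \<Rightarrow> real^'n) \<Rightarrow> (nat \<Rightarrow> real^'m) \<Rightarrow> (nat \<Rightarrow> real^'n)" where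
  "paral_filter N lam Win b tau f x = (\<lambda>k. f (realify N (esn_states N lam Win b tau x k)))"

definition polynomial_fun :: "(real \<Rightarrow> real) \<Rightarrow> bool" where
  "polynomial_fun g \<longleftrightarrow> (\<exists>n a. \<forall>t. g t = (\<Sum>i\<le>n. a i * t ^ i))"

end

theory Submission
  imports Defs "HOL-Computational_Algebra.Polynomial"
begin


definition ac :: "(real \<Rightarrow> real) \<Rightarrow> (real \<Rightarrow> real) \<Rightarrow> bool" where
 "ac \<sigma> g \<longleftrightarrow> (\<forall>R e. e > 0 \<longrightarrow> (\<exists>(n::nat) a w b. \<forall>t. \<bar>t\<bar> \<le> R \<longrightarrow>
     \<bar>g t - (\<Sum>i<n. a i * \<sigma> (w i * t + b i))\<bar> < e))"

lemma sum_split_nat: "(\<Sum>i<n1+n2. F i) = (\<Sum>i<n1. F i) + (\<Sum>i<n2. F (n1 + i :: nat))"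
  by (induction n2) (simp_all add: add.assoc)

lemma ac_sigma: "ac \<sigma> (\<lambda>t. \<sigma> (w*t+b))"
  unfolding ac_def
  by (intro allI impI, rule exI[of _ 1], rule exI[of _ "\<lambda>_. 1"], rule exI[of _ "\<lambda>_. w"], rule exI[of _ "\<lambda>_. b"]) simp

lemma ac_zero: "ac \<sigma> (\<lambda>t. 0)"
  unfolding ac_def by (intro allI impI exI[of _ 0]) simp

lemma acD: assumes "ac \<sigma> g" "e > 0"
  obtains n :: nat and a w b where "\<And>t. \<bar>t\<bar> \<le> R \<Longrightarrow> \<bar>g t - (\<Sum>i<n. a i * \<sigma> (w i * t + b i))\<bar> < e"
  using assms unfolding ac_def by blast

lemma ac_limit:
  assumes "\<And>R e. e > 0 \<Longrightarrow> \<exists>g'. ac \<sigma> g' \<and> (\<forall>t. \<bar>t\<bar> \<le> R \<longrightarrow> \<bar>g t - g' t\<bar> < e)"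
  shows "ac \<sigma> g"
  unfolding ac_def
proof (intro allI impI)
  fix R e :: real assume e: "e>0"
  have e2: "e/2 > 0" using e by simp
  from assms[where R=R, OF e2] obtain g' where g': "ac \<sigma> g'" "\<forall>t. \<bar>t\<bar> \<le> R \<longrightarrow> \<bar>g t - g' t\<bar> < e/2" by blast
  obtain n :: nat and a w b where
    r: "\<And>t. \<bar>t\<bar> \<le> R \<Longrightarrow> \<bar>g' t - (\<Sum>i<n. a i * \<sigma> (w i * t + b i))\<bar> < e/2" by (rule acD[OF g'(1) e2, where R=R]) (rule that)
  show "\<exists>(n::nat) a w b. \<forall>t. \<bar>t\<bar> \<le> R \<longrightarrow> \<bar>g t - (\<Sum>i<n. a i * \<sigma> (w i * t + b i))\<bar> < e"
  proof (rule exI[of _ n], rule exI[of _ a], rule exI[of _ w], rule exI[of _ b], intro allI impI)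
    fix t :: real assume t: "\<bar>t\<bar> \<le> R"
    have "\<bar>g t - g' t\<bar> < e/2" using g'(2) t by blast
    with r[OF t] show "\<bar>g t - (\<Sum>i<n. a i * \<sigma> (w i * t + b i))\<bar> < e" by linarith
  qed
qed

lemma ac_add: assumes "ac \<sigma> f" "ac \<sigma> g" shows "ac \<sigma> (\<lambda>t. f t + g t)"
  unfolding ac_def
proof (intro allI impI)
  fix R e :: real assume e: "e>0"
  have e2: "e/2 > 0" using e by simp
  obtain n1 :: nat and a1 w1 b1 where
    r1: "\<And>t. \<bar>t\<bar> \<le> R \<Longrightarrow> \<bar>f t - (\<Sum>i<n1. a1 i * \<sigma> (w1 i * t + b1 i))\<bar> < e/2" by (rule acD[OF assms(1) e2, where R=R]) (rule that)
  obtain n2 :: nat and a2 w2 b2 where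
    r2: "\<And>t. \<bar>t\<bar> \<le> R \<Longrightarrow> \<bar>g t - (\<Sum>i<n2. a2 i * \<sigma> (w2 i * t + b2 i))\<bar> < e/2" by (rule acD[OF assms(2) e2, where R=R]) (rule that)
  define a where "a i = (if i < n1 then a1 i else a2 (i - n1))" for i
  define w where "w i = (if i < n1 then w1 i else w2 (i - n1))" for i
  define b where "b i = (if i < n1 then b1 i else b2 (i - n1))" for i
  have eq: "(\<Sum>i<n1+n2. a i * \<sigma> (w i * t + b i)) = (\<Sum>i<n1. a1 i * \<sigma> (w1 i * t + b1 i)) + (\<Sum>i<n2. a2 i * \<sigma> (w2 i * t + b2 i))" for t
    unfolding sum_split_nat by (simp add: a_def w_def b_def)
  show "\<exists>(n::nat) a w b. \<forall>t. \<bar>t\<bar> \<le> R \<longrightarrow> \<bar>f t + g t - (\<Sum>i<n. a i * \<sigma> (w i * t + b i))\<bar> < e"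
  proof (intro exI allI impI)
    fix t :: real assume t: "\<bar>t\<bar> \<le> R"
    from r1[OF t] r2[OF t] show "\<bar>f t + g t - (\<Sum>i<n1+n2. a i * \<sigma> (w i * t + b i))\<bar> < e"
      unfolding eq by linarith
  qed
qed

lemma ac_scale: assumes "ac \<sigma> f" shows "ac \<sigma> (\<lambda>t. c * f t)"
proof (cases "c = 0")
  case True then show ?thesis using ac_zero by simp
next
  case False
  show ?thesis unfolding ac_def
  proof (intro allI impI)
    fix R e :: real assume e: "e>0"
    from False e have ec: "e / \<bar>c\<bar> > 0" by simp
    obtain n :: nat and a w b where
      r: "\<And>t. \<bar>t\<bar> \<le> R \<Longrightarrow> \<bar>f t - (\<Sum>i<n. a i * \<sigma> (w i * t + b i))\<bar> < e / \<bar>c\<bar>" by (rule acD[OF assms ec, where R=R]) (rule that)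
    show "\<exists>(n::nat) a w b. \<forall>t. \<bar>t\<bar> \<le> R \<longrightarrow> \<bar>c * f t - (\<Sum>i<n. a i * \<sigma> (w i * t + b i))\<bar> < e"
    proof (rule exI[of _ n], rule exI[of _ "\<lambda>i. c * a i"], rule exI[of _ w], rule exI[of _ b], intro allI impI)
      fix t :: real assume t: "\<bar>t\<bar> \<le> R"
      have "\<bar>c * f t - (\<Sum>i<n. c * a i * \<sigma> (w i * t + b i))\<bar> = \<bar>c\<bar> * \<bar>f t - (\<Sum>i<n. a i * \<sigma> (w i * t + b i))\<bar>"
      proof -
        have "c * f t - (\<Sum>i<n. c * a i * \<sigma> (w i * t + b i)) = c * (f t - (\<Sum>i<n. a i * \<sigma> (w i * t + b i)))"
          by (simp add: sum_distrib_left right_diff_distrib mult.assoc)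
        then show ?thesis by (simp add: abs_mult)
      qed
      also have "\<dots> < \<bar>c\<bar> * (e / \<bar>c\<bar>)" by (rule mult_strict_left_mono) (use r[OF t] False in auto)
      also have "\<dots> = e" using False by simp
      finally show "\<bar>c * f t - (\<Sum>i<n. c * a i * \<sigma> (w i * t + b i))\<bar> < e" .
    qed
  qed
qed

lemma ac_diff: assumes "ac \<sigma> f" "ac \<sigma> g" shows "ac \<sigma> (\<lambda>t. f t - g t)"
  using ac_add[OF assms(1) ac_scale[OF assms(2), of "-1"]] by simp

lemma ac_sum: fixes n :: nat assumes "\<And>i. i < n \<Longrightarrow> ac \<sigma> (F i)" shows "ac \<sigma> (\<lambda>t. \<Sum>i<n. F i t)"
  using assms
proof (induction n)
  case 0 then show ?case using ac_zero by simp
next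
  case (Suc n) then show ?case using ac_add[of \<sigma> "\<lambda>t. \<Sum>i<n. F i t" "F n"] by simp
qed

lemma ac_affine: assumes "ac \<sigma> g" shows "ac \<sigma> (\<lambda>t. g (\<alpha>*t+\<beta>))"
  unfolding ac_def
proof (intro allI impI)
  fix R e :: real assume e: "e>0"
  obtain n :: nat and a w b where
    r: "\<And>t. \<bar>t\<bar> \<le> \<bar>\<alpha>\<bar>*\<bar>R\<bar>+\<bar>\<beta>\<bar> \<Longrightarrow> \<bar>g t - (\<Sum>i<n. a i * \<sigma> (w i * t + b i))\<bar> < e" by (rule acD[OF assms e, where R="\<bar>\<alpha>\<bar>*\<bar>R\<bar>+\<bar>\<beta>\<bar>"]) (rule that)
  show "\<exists>(n::nat) a w b. \<forall>t. \<bar>t\<bar> \<le> R \<longrightarrow> \<bar>g (\<alpha>*t+\<beta>) - (\<Sum>i<n. a i * \<sigma> (w i * t + b i))\<bar> < e"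
  proof (rule exI[of _ n], rule exI[of _ a], rule exI[of _ "\<lambda>i. w i * \<alpha>"], rule exI[of _ "\<lambda>i. w i * \<beta> + b i"], intro allI impI)
    fix t :: real assume t: "\<bar>t\<bar> \<le> R"
    have "\<bar>\<alpha>*t\<bar> \<le> \<bar>\<alpha>\<bar>*\<bar>R\<bar>" using t by (simp add: abs_mult mult_left_mono)
    moreover have "\<bar>\<alpha>*t+\<beta>\<bar> \<le> \<bar>\<alpha>*t\<bar> + \<bar>\<beta>\<bar>" by (rule abs_triangle_ineq)
    ultimately have "\<bar>\<alpha>*t+\<beta>\<bar> \<le> \<bar>\<alpha>\<bar>*\<bar>R\<bar>+\<bar>\<beta>\<bar>" by linarith
    from r[OF this] show "\<bar>g (\<alpha>*t+\<beta>) - (\<Sum>i<n. a i * \<sigma> (w i * \<alpha> * t + (w i * \<beta> + b i)))\<bar> < e"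
      by (simp add: algebra_simps)
  qed
qed


definition avg :: "real \<Rightarrow> (real \<Rightarrow> real) \<Rightarrow> real \<Rightarrow> real" where
  "avg h g t = integral {0..h} (\<lambda>s. g (t + s)) / h"
definition dif :: "real \<Rightarrow> (real \<Rightarrow> real) \<Rightarrow> real \<Rightarrow> real" where
  "dif h g t = (g (t + h) - g t) / h"

lemma cont_shift: "continuous_on UNIV (g :: real \<Rightarrow> real) \<Longrightarrow> continuous_on A (\<lambda>s. g (t + s))"
  by (rule continuous_on_compose2[of UNIV g]) (auto intro!: continuous_intros)

lemma cont_shift': "continuous_on UNIV (g :: real \<Rightarrow> real) \<Longrightarrow> continuous_on A (\<lambda>s. g (s + t))"
  by (rule continuous_on_compose2[of UNIV g]) (auto intro!: continuous_intros)

lemma cont_affine: "continuous_on UNIV (g :: real \<Rightarrow> real) \<Longrightarrow> continuous_on A (\<lambda>s. g (\<alpha> * s + \<beta>))"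
  by (rule continuous_on_compose2[of UNIV g]) (auto intro!: continuous_intros)

lemma integral_shift_eq: "integral {p..q} (\<lambda>s. g (t + s)) = integral {t+p..t+q} (g :: real \<Rightarrow> real)"
  using integral_shift_Icc_real[of p q g t] by (simp add: o_def add.commute)

lemma avg_deriv: assumes "h > 0" "continuous_on UNIV g"
  shows "(avg h g has_real_derivative dif h g t) (at t)"
proof -
  define a where "a = t - 1"
  define b where "b = t + h + 1"
  define G where "G u = integral {a..u} g" for u
  have cg: "continuous_on {a..b} g" using assms(2) continuous_on_subset by blast
  have G': "(G has_real_derivative g x) (at x)" if "a < x" "x < b" for x
  proof -
    have "(G has_real_derivative g x) (at x within {a..b})"
      unfolding G_def by (rule integral_has_real_derivative[OF cg]) (use that in auto)
    then show ?thesis using at_within_Icc_at[OF that] by simp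
  qed
  have eq: "(G (u + h) - G u) / h = avg h g u" if "u \<in> {t - 1<..<t + 1}" for u
  proof -
    have "integral {a..u} g + integral {u..u+h} g = integral {a..u+h} g"
      by (rule Henstock_Kurzweil_Integration.integral_combine[where a=a and c=u and b="u+h" and f=g]) (use that assms in \<open>auto simp: a_def intro!: integrable_continuous_real continuous_on_subset[OF assms(2)]\<close>)
    then show ?thesis unfolding avg_def G_def integral_shift_eq by (simp add: algebra_simps)
  qed
  have d1: "((\<lambda>u. G (u + h)) has_real_derivative g (t + h)) (at t)"
    using DERIV_shift[of G "g (t+h)" t h] G'[of "t+h"] assms(1) by (simp add: a_def b_def)
  have d2: "(G has_real_derivative g t) (at t)" using G'[of t] assms(1) by (simp add: a_def b_def)
  have "((\<lambda>u. (G (u + h) - G u) / h) has_real_derivative (g (t + h) - g t) / h) (at t)"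
    by (intro DERIV_cdivide DERIV_diff d1 d2)
  then show ?thesis unfolding dif_def
    by (rule has_field_derivative_transform_within_open[where S="{t - 1<..<t + 1}"]) (use eq in auto)
qed

lemma cont_avg: assumes "h > 0" "continuous_on UNIV g" shows "continuous_on UNIV (avg h g)"
proof (intro continuous_at_imp_continuous_on ballI)
  fix x :: real show "isCont (avg h g) x" using avg_deriv[OF assms] by (rule DERIV_isCont)
qed

lemma cont_dif: assumes "continuous_on UNIV g" shows "continuous_on UNIV (dif h g)"
proof -
  have "dif h g = (\<lambda>t. (g (t + h) - g t) * (1/h))" unfolding dif_def by auto
  then show ?thesis by (simp only:) (intro continuous_intros cont_shift' assms)
qed

lemma cont_dif_pow: "continuous_on UNIV g \<Longrightarrow> continuous_on UNIV ((dif h ^^ m) g)"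
  by (induction m) (auto intro: cont_dif)

lemma cont_avg_pow: "h > 0 \<Longrightarrow> continuous_on UNIV g \<Longrightarrow> continuous_on UNIV ((avg h ^^ m) g)"
  by (induction m) (auto intro: cont_avg)

lemma dif_avg: assumes "h > 0" "continuous_on UNIV g"
  shows "dif h (avg h g) t = avg h (dif h g) t"
proof -
  have i1: "(\<lambda>s. g (t + h + s)) integrable_on {0..h}" by (intro integrable_continuous_real cont_shift assms)
  have i2: "(\<lambda>s. g (t + s)) integrable_on {0..h}" by (intro integrable_continuous_real cont_shift assms)
  have e1: "(\<lambda>s. dif h g (t + s)) = (\<lambda>s. (g (t + h + s) - g (t + s)) * (1/h))"
    unfolding dif_def by (auto simp: ac_simps)
  have "avg h (dif h g) t = (integral {0..h} (\<lambda>s. g (t + h + s)) - integral {0..h} (\<lambda>s. g (t + s))) * (1/h) / h"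
    unfolding avg_def e1 integral_mult_right using Henstock_Kurzweil_Integration.integral_diff[OF i1 i2] by simp
  also have "\<dots> = dif h (avg h g) t"
    unfolding dif_def avg_def by (simp add: diff_divide_distrib)
  finally show ?thesis by simp
qed

lemma dif_pow_avg: assumes "h > 0" "continuous_on UNIV g"
  shows "(dif h ^^ m) (avg h g) = avg h ((dif h ^^ m) g)"
proof (induction m)
  case 0 then show ?case by simp
next
  case (Suc m)
  have "(dif h ^^ Suc m) (avg h g) = dif h (avg h ((dif h ^^ m) g))" using Suc by simp
  also have "\<dots> = avg h (dif h ((dif h ^^ m) g))"
    by (rule ext, rule dif_avg[OF assms(1) cont_dif_pow[OF assms(2)]])
  finally show ?case by simp
qed

lemma avg_range:
  assumes "h > 0" "continuous_on UNIV g" "\<And>u. u \<in> {a..b+h} \<Longrightarrow> \<bar>g u - c\<bar> \<le> \<eta>" "u \<in> {a..b}"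
  shows "\<bar>avg h g u - c\<bar> \<le> \<eta>"
proof -
  have i1: "(\<lambda>s. g (u + s)) integrable_on {0..h}" by (intro integrable_continuous_real cont_shift assms)
  have "integral {0..h} (\<lambda>s. g (u + s) - c) = integral {0..h} (\<lambda>s. g (u + s)) - h * c"
    using Henstock_Kurzweil_Integration.integral_diff[OF i1 integrable_const_ivl[of c 0 h]] assms(1) by simp
  then have eq: "avg h g u - c = integral {0..h} (\<lambda>s. g (u + s) - c) / h"
    unfolding avg_def using assms(1) by (simp add: field_simps)
  have "norm (integral {0..h} (\<lambda>s. g (u + s) - c)) \<le> \<eta> * (h - 0)"
  proof (rule integral_bound)
    show "continuous_on {0..h} (\<lambda>s. g (u + s) - c)" by (intro continuous_intros cont_shift assms)
    fix s assume "s \<in> {0..h}"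
    then show "norm (g (u + s) - c) \<le> \<eta>" using assms(3)[of "u+s"] assms(4) by auto
  qed (use assms in auto)
  then show ?thesis unfolding eq using assms(1) by (simp add: field_simps abs_divide)
qed


lemma integral_split_n:
  assumes "\<delta> > 0" "continuous_on UNIV (g :: real \<Rightarrow> real)"
  shows "integral {0..real m * \<delta>} (\<lambda>s. g (t+s)) = (\<Sum>i<m. integral {0..\<delta>} (\<lambda>s. g (t + real i * \<delta> + s)))"
proof (induction m)
  case 0 then show ?case by simp
next
  case (Suc m)
  have "integral {0..real m * \<delta>} (\<lambda>s. g (t+s)) + integral {real m * \<delta>..real (Suc m) * \<delta>} (\<lambda>s. g (t+s))
        = integral {0..real (Suc m) * \<delta>} (\<lambda>s. g (t+s))"
    by (rule Henstock_Kurzweil_Integration.integral_combine)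
       (use assms in \<open>auto simp: algebra_simps intro!: integrable_continuous_real cont_shift cont_shift'\<close>)
  moreover have "integral {real m * \<delta>..real (Suc m) * \<delta>} (\<lambda>s. g (t+s)) = integral {0..\<delta>} (\<lambda>s. g (t + real m * \<delta> + s))"
    unfolding integral_shift_eq by (simp add: algebra_simps)
  ultimately show ?case using Suc by simp
qed

lemma ac_avg:
  assumes h: "h > 0" and cg: "continuous_on UNIV g" and acg: "ac \<sigma> g"
  shows "ac \<sigma> (avg h g)"
proof (rule ac_limit)
  fix R e :: real assume e: "e > 0"
  define K where "K = {-\<bar>R\<bar>-1 .. \<bar>R\<bar>+h+1}"
  have "uniformly_continuous_on K g"
    by (rule compact_uniformly_continuous) (use cg continuous_on_subset in \<open>auto simp: K_def\<close>)
  moreover have e2: "e/2 > 0" using e by simp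
  ultimately obtain d where d: "d > 0" and dd: "\<And>x x'. x \<in> K \<Longrightarrow> x' \<in> K \<Longrightarrow> dist x' x < d \<Longrightarrow> dist (g x') (g x) < e/2"
    unfolding uniformly_continuous_on_def by metis
  define n where "n = Suc (nat \<lceil>h / d\<rceil>)"
  have n: "n > 0" "h / d < real n" unfolding n_def by (auto, linarith)
  then have "h < d * real n" using d by (simp add: divide_less_eq mult.commute)
  then have hn: "h / real n < d" using n(1) by (simp add: divide_less_eq mult.commute)
  define \<delta> where "\<delta> = h / real n"
  have \<delta>: "\<delta> > 0" "real n * \<delta> = h" "\<delta> < d" using n(1) h hn unfolding \<delta>_def by auto
  define r where "r t = (\<Sum>i<n. (1 / real n) * g (1 * t + real i * \<delta>))" for t
  have acr: "ac \<sigma> r"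
  proof -
    have "\<And>i. ac \<sigma> (\<lambda>t. (1 / real n) * g (1 * t + real i * \<delta>))" by (rule ac_scale[OF ac_affine[OF acg]])
    then show ?thesis unfolding r_def by (rule ac_sum)
  qed
  show "\<exists>g'. ac \<sigma> g' \<and> (\<forall>t. \<bar>t\<bar> \<le> R \<longrightarrow> \<bar>avg h g t - g' t\<bar> < e)"
  proof (rule exI[of _ r], intro conjI allI impI acr)
    fix t :: real assume t: "\<bar>t\<bar> \<le> R"
    have eqavg: "avg h g t = (\<Sum>i<n. (1/real n) * avg \<delta> g (t + real i * \<delta>))"
    proof -
      have "avg h g t = (\<Sum>i<n. integral {0..\<delta>} (\<lambda>s. g (t + real i * \<delta> + s))) / h"
        unfolding avg_def using integral_split_n[OF \<delta>(1) cg, of n t] \<delta>(2) by simp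
      also have "\<dots> = (\<Sum>i<n. (1/real n) * avg \<delta> g (t + real i * \<delta>))"
        unfolding avg_def sum_divide_distrib using \<delta>(1,2) n(1)
        by (intro sum.cong refl) (auto simp: field_simps)
      finally show ?thesis .
    qed
    have each: "\<bar>avg \<delta> g (t + real i * \<delta>) - g (t + real i * \<delta>)\<bar> \<le> e/2" if i: "i < n" for i
    proof (rule avg_range[OF \<delta>(1) cg])
      have ih': "real (Suc i) * \<delta> \<le> h" using i \<delta> by (auto intro!: mult_right_mono simp del: of_nat_Suc)
      then have ih: "real i * \<delta> + \<delta> \<le> h" by (simp add: algebra_simps)
      have ih0: "0 \<le> real i * \<delta>" using \<delta> by simp
      fix u assume u: "u \<in> {t + real i * \<delta>..t + real i * \<delta> + \<delta>}"
      have tR: "-\<bar>R\<bar> \<le> t" "t \<le> \<bar>R\<bar>" using t by linarith+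
      have "t + real i * \<delta> \<in> K" "u \<in> K" using u tR ih ih0 \<delta>(1) unfolding K_def atLeastAtMost_iff
        by (intro conjI; linarith)+
      moreover have "dist u (t + real i * \<delta>) < d" using u \<delta> by (auto simp: dist_real_def)
      ultimately have "dist (g u) (g (t + real i * \<delta>)) < e/2" by (rule dd)
      then show "\<bar>g u - g (t + real i * \<delta>)\<bar> \<le> e / 2" by (simp add: dist_real_def)
    qed auto
    have "\<bar>avg h g t - r t\<bar> = \<bar>\<Sum>i<n. (1/real n) * (avg \<delta> g (t + real i * \<delta>) - g (t + real i * \<delta>))\<bar>"
      unfolding eqavg r_def by (simp add: sum_subtractf[symmetric] right_diff_distrib)
    also have "\<dots> \<le> (\<Sum>i<n. \<bar>(1/real n) * (avg \<delta> g (t + real i * \<delta>) - g (t + real i * \<delta>))\<bar>)"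
      by (rule sum_abs)
    also have "\<dots> \<le> (\<Sum>i<n. (1/real n) * (e/2))"
    proof (rule sum_mono)
      fix i assume "i \<in> {..<n}"
      then have ei: "\<bar>avg \<delta> g (t + real i * \<delta>) - g (t + real i * \<delta>)\<bar> \<le> e/2" by (intro each) auto
      show "\<bar>(1/real n) * (avg \<delta> g (t + real i * \<delta>) - g (t + real i * \<delta>))\<bar> \<le> (1/real n) * (e/2)"
        using mult_left_mono[OF ei, of "1/real n"] by (simp add: abs_mult)
    qed
    also have "\<dots> = e/2" using n(1) by simp
    finally show "\<bar>avg h g t - r t\<bar> < e" using e by linarith
  qed
qed


lemma ac_deriv_step:
  assumes acj: "\<And>w b. ac \<sigma> (\<lambda>t. t^j * \<phi> (w*t+b))"
    and der: "\<And>x. (\<phi> has_real_derivative \<phi>' x) (at x)"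
    and cont: "continuous_on UNIV \<phi>'"
  shows "ac \<sigma> (\<lambda>t. t^(Suc j) * \<phi>' (w*t+b))"
proof (rule ac_limit)
  fix R e :: real assume e: "e>0"
  define R0 where "R0 = \<bar>R\<bar> + 1"
  have R0: "R0 \<ge> 1" unfolding R0_def by simp
  define L where "L = \<bar>w\<bar>*R0 + \<bar>b\<bar> + R0"
  have "uniformly_continuous_on {-L..L} \<phi>'"
    by (rule compact_uniformly_continuous) (use cont continuous_on_subset in auto)
  moreover define \<eta> where "\<eta> = e / (2 * R0^(Suc j))"
  moreover have \<eta>: "\<eta> > 0" unfolding \<eta>_def using e R0 by simp
  ultimately obtain d where d: "d > 0" and dd: "\<And>x x'. x \<in> {-L..L} \<Longrightarrow> x' \<in> {-L..L} \<Longrightarrow> dist x' x < d \<Longrightarrow> dist (\<phi>' x') (\<phi>' x) < \<eta>"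
    unfolding uniformly_continuous_on_def by metis
  define \<delta> where "\<delta> = min 1 (d / (2*R0))"
  have \<delta>: "\<delta> > 0" "\<delta> \<le> 1" "\<delta> * R0 < d"
  proof -
    show "\<delta> > 0" "\<delta> \<le> 1" unfolding \<delta>_def using d R0 by auto
    have "\<delta> * R0 \<le> d / (2*R0) * R0" unfolding \<delta>_def using R0 by (intro mult_right_mono) auto
    also have "\<dots> = d/2" using R0 by simp
    finally show "\<delta> * R0 < d" using d by linarith
  qed
  define g' where "g' t = (1/\<delta>) * (t^j * \<phi> ((w+\<delta>)*t+b) - t^j * \<phi> (w*t+b))" for t
  have acg: "ac \<sigma> g'" unfolding g'_def by (intro ac_scale ac_diff acj)
  show "\<exists>g'. ac \<sigma> g' \<and> (\<forall>t. \<bar>t\<bar> \<le> R \<longrightarrow> \<bar>t^(Suc j) * \<phi>' (w*t+b) - g' t\<bar> < e)"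
  proof (rule exI[of _ g'], intro conjI allI impI acg)
    fix t :: real assume t: "\<bar>t\<bar> \<le> R"
    have tR0: "\<bar>t\<bar> \<le> R0" using t unfolding R0_def by linarith
    define c where "c = w*t+b"
    have dphi: "((\<lambda>u. \<phi> (u + c)) has_real_derivative \<phi>' (x + c)) (at x)" for x
      using der[of "x + c"] DERIV_shift by blast
    obtain s where s: "\<bar>s\<bar> \<le> \<bar>\<delta>*t\<bar>"
      and eq: "\<phi> (\<delta>*t + c) = (\<Sum>m<1. (\<lambda>(m::nat) u. if m = 0 then \<phi> (u + c) else \<phi>' (u + c)) m 0 / fact m * (\<delta>*t) ^ m)
          + (\<lambda>(m::nat) u. if m = 0 then \<phi> (u + c) else \<phi>' (u + c)) 1 s / fact 1 * (\<delta>*t) ^ 1"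
      using Maclaurin_bi_le[of "\<lambda>(m::nat) u. if m = 0 then \<phi> (u + c) else \<phi>' (u + c)" "\<lambda>u. \<phi> (u + c)" 1 "\<delta>*t"]
        dphi by auto
    have eq2: "\<phi> ((w+\<delta>)*t+b) = \<phi> c + \<phi>' (s + c) * (\<delta>*t)"
    proof -
      have "(w+\<delta>)*t+b = \<delta>*t + c" unfolding c_def by (simp add: algebra_simps)
      then show ?thesis using eq by simp
    qed
    have g't: "g' t = t^(Suc j) * \<phi>' (s + c)"
      unfolding g'_def eq2 using \<delta>(1) by (simp add: c_def field_simps)
    have cL: "c \<in> {-L..L}"
    proof -
      have "\<bar>w*t\<bar> \<le> \<bar>w\<bar>*R0" using tR0 by (simp add: abs_mult mult_left_mono)
      then have "\<bar>c\<bar> \<le> \<bar>w\<bar>*R0 + \<bar>b\<bar>" unfolding c_def by linarith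
      then show ?thesis unfolding L_def using R0 by auto
    qed
    have sR: "\<bar>s\<bar> \<le> \<delta> * R0"
    proof -
      have "\<bar>\<delta>*t\<bar> = \<delta> * \<bar>t\<bar>" using \<delta>(1) by (simp add: abs_mult)
      also have "\<dots> \<le> \<delta> * R0" using tR0 \<delta>(1) by (simp add: mult_left_mono)
      finally show ?thesis using s by linarith
    qed
    have scL: "s + c \<in> {-L..L}"
    proof -
      have "\<bar>c\<bar> \<le> \<bar>w\<bar>*R0 + \<bar>b\<bar>"
      proof -
        have "\<bar>w*t\<bar> \<le> \<bar>w\<bar>*R0" using tR0 by (simp add: abs_mult mult_left_mono)
        then show ?thesis unfolding c_def by linarith
      qed
      moreover have "\<delta> * R0 \<le> R0" using \<delta>(2) R0 by simp
      ultimately show ?thesis unfolding L_def using sR by auto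
    qed
    have "dist (s + c) c < d" using sR \<delta>(3) by (simp add: dist_real_def)
    then have close: "\<bar>\<phi>' (s + c) - \<phi>' c\<bar> < \<eta>" using dd[OF cL scL] by (simp add: dist_real_def)
    have "\<bar>t^(Suc j) * \<phi>' c - g' t\<bar> = \<bar>t\<bar>^(Suc j) * \<bar>\<phi>' (s + c) - \<phi>' c\<bar>"
      unfolding g't by (simp add: abs_mult power_abs right_diff_distrib[symmetric] abs_minus_commute)
    also have "\<dots> \<le> R0^(Suc j) * \<eta>"
      by (intro mult_mono power_mono tR0) (use close R0 in auto)
    also have "\<dots> = e/2" unfolding \<eta>_def using R0 by simp
    finally show "\<bar>t^(Suc j) * \<phi>' (w*t+b) - g' t\<bar> < e" using e unfolding c_def by linarith
  qed
qed

definition dd :: "real \<Rightarrow> nat \<Rightarrow> (real \<Rightarrow> real) \<Rightarrow> nat \<Rightarrow> real \<Rightarrow> real" where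
  "dd h k g m = (dif h ^^ m) ((avg h ^^ (k - m)) g)"

lemma cont_dd: "h > 0 \<Longrightarrow> continuous_on UNIV g \<Longrightarrow> continuous_on UNIV (dd h k g m)"
  unfolding dd_def by (intro cont_dif_pow cont_avg_pow)

lemma deriv_dd:
  assumes h: "h > 0" and cg: "continuous_on UNIV g" and m: "m < k"
  shows "(dd h k g m has_real_derivative dd h k g (Suc m) x) (at x)"
proof -
  have k: "k - m = Suc (k - Suc m)" using m by simp
  define G where "G = (dif h ^^ m) ((avg h ^^ (k - Suc m)) g)"
  have cG: "continuous_on UNIV G" unfolding G_def by (intro cont_dif_pow cont_avg_pow h cg)
  have "dd h k g m = avg h G"
    unfolding dd_def k G_def using dif_pow_avg[OF h cont_avg_pow[OF h cg]] by simp
  moreover have "dd h k g (Suc m) = dif h G" unfolding dd_def G_def by simp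
  ultimately show ?thesis using avg_deriv[OF h cG] by simp
qed

lemma ac_avg_pow: "h > 0 \<Longrightarrow> continuous_on UNIV g \<Longrightarrow> ac \<sigma> g \<Longrightarrow> ac \<sigma> ((avg h ^^ n) g)"
  by (induction n) (auto intro!: ac_avg cont_avg_pow)

lemma ac_monomial:
  assumes cs: "continuous_on UNIV \<sigma>" and h: "h > 0" and b: "(dif h ^^ k) \<sigma> b \<noteq> 0"
  shows "ac \<sigma> (\<lambda>t. t^k)"
proof -
  have acs: "ac \<sigma> \<sigma>" using ac_sigma[of \<sigma> 1 0] by simp
  have acD0: "ac \<sigma> (dd h k \<sigma> 0)" unfolding dd_def using ac_avg_pow[OF h cs acs] by simp
  have Q: "\<forall>w b. ac \<sigma> (\<lambda>t. t^j * dd h k \<sigma> j (w*t+b))" if "j \<le> k" for j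
    using that
  proof (induction j)
    case 0 then show ?case using ac_affine[OF acD0] by simp
  next
    case (Suc j)
    then have "j < k" by simp
    show ?case
      by (intro allI ac_deriv_step[where \<phi>="dd h k \<sigma> j"] Suc.IH[rule_format] deriv_dd h cs \<open>j < k\<close> cont_dd)
         (use Suc in auto)
  qed
  from Q[of k] have "ac \<sigma> (\<lambda>t. t^k * dd h k \<sigma> k (0*t+b))" by blast
  then have "ac \<sigma> (\<lambda>t. t^k * (dif h ^^ k) \<sigma> b)" unfolding dd_def by simp
  from ac_scale[OF this, of "1 / (dif h ^^ k) \<sigma> b"] show ?thesis using b by simp
qed


lemma poly_limit:
  fixes c :: "nat \<Rightarrow> nat \<Rightarrow> real" and f :: "nat \<Rightarrow> real \<Rightarrow> real"
  assumes k: "k > 0" and P: "\<And>n t. f n t = (\<Sum>m<k. c n m * t^m)" and L: "\<And>t. (\<lambda>n. f n t) \<longlonglongrightarrow> g t"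
  shows "polynomial_fun g"
proof -
  define LP where "LP i = (\<Prod>j\<in>{..<k} - {i}. [:- real j / (real i - real j), 1 / (real i - real j):])" for i
  have LPv: "poly (LP i) (real l) = (if l = i then 1 else 0)" if "i < k" "l < k" for i l
  proof (cases "l = i")
    case True
    have one: "poly [:- real j / (real i - real j), 1 / (real i - real j):] (real i) = 1" if "j \<noteq> i" for j
    proof -
      have d: "real i - real j \<noteq> 0" using that by simp
      have "poly [:- real j / (real i - real j), 1 / (real i - real j):] (real i) = real i / (real i - real j) - real j / (real i - real j)"
        by simp
      also have "\<dots> = (real i - real j) / (real i - real j)" by (rule diff_divide_distrib[symmetric])
      also have "\<dots> = 1" using d by (rule divide_self)
      finally show ?thesis .
    qed
    show ?thesis unfolding LP_def poly_prod True by (simp, intro prod.neutral) (use one in auto)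
  next
    case False
    have "(\<Prod>j\<in>{..<k} - {i}. poly [:- real j / (real i - real j), 1 / (real i - real j):] (real l)) = 0"
      by (rule prod_zero) (use that False in \<open>auto intro!: bexI[of _ l]\<close>)
    then show ?thesis unfolding LP_def poly_prod using False by simp
  qed
  have LPd: "degree (LP i) < k" if "i < k" for i
  proof -
    have "degree (LP i) \<le> sum (degree \<circ> (\<lambda>j. [:- real j / (real i - real j), 1 / (real i - real j):])) ({..<k} - {i})"
      unfolding LP_def by (rule degree_prod_sum_le) simp
    also have "\<dots> = (\<Sum>j\<in>{..<k} - {i}. degree [:- real j / (real i - real j), 1 / (real i - real j):])"
      by simp
    also have "\<dots> \<le> (\<Sum>j\<in>{..<k} - {i}. 1)" by (intro sum_mono) auto
    also have "\<dots> = k - 1" using that by simp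
    finally show ?thesis using k by linarith
  qed
  have card: "card (real ` {..<k}) = k" by (simp add: card_image)
  have rep: "f n t = (\<Sum>i<k. f n (real i) * poly (LP i) t)" for n t
  proof -
    define Pp where "Pp = (\<Sum>m<k. monom (c n m) m)"
    define Qp where "Qp = (\<Sum>i<k. smult (f n (real i)) (LP i))"
    have pP: "poly Pp x = f n x" for x by (simp add: Pp_def P poly_sum poly_monom)
    have pQ: "poly Qp x = (\<Sum>i<k. f n (real i) * poly (LP i) x)" for x by (simp add: Qp_def poly_sum)
    have "Pp = Qp"
    proof (rule poly_eqI_degree[of "real ` {..<k}"])
      fix x assume "x \<in> real ` {..<k}"
      then obtain l where l: "l < k" "x = real l" by auto
      have "(\<Sum>i<k. f n (real i) * poly (LP i) (real l)) = (\<Sum>i<k. if i = l then f n (real l) else 0)"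
        by (intro sum.cong refl) (use l LPv in auto)
      also have "\<dots> = f n (real l)" using l by simp
      finally show "poly Pp x = poly Qp x" unfolding pP pQ l by simp
    next
      show "degree Pp < card (real ` {..<k})" unfolding card Pp_def
      proof -
        have "degree (\<Sum>m<k. monom (c n m) m) \<le> k - 1"
          by (rule degree_sum_le) (auto intro: order.trans[OF degree_monom_le])
        then show "degree (\<Sum>m<k. monom (c n m) m) < k" using k by linarith
      qed
    next
      show "degree Qp < card (real ` {..<k})" unfolding card Qp_def
      proof -
        have "degree (\<Sum>i<k. smult (f n (real i)) (LP i)) \<le> k - 1"
          by (rule degree_sum_le) (auto intro: order.trans[OF degree_smult_le] dest: LPd)
        then show "degree (\<Sum>i<k. smult (f n (real i)) (LP i)) < k" using k by linarith
      qed
    qed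
    then show ?thesis using pP pQ by metis
  qed
  define Q where "Q = (\<Sum>i<k. smult (g (real i)) (LP i))"
  have gQ: "g t = poly Q t" for t
  proof -
    have "(\<lambda>n. f n t) \<longlonglongrightarrow> (\<Sum>i<k. g (real i) * poly (LP i) t)"
      unfolding rep[of _ t] by (intro tendsto_sum tendsto_mult_right L)
    with L[of t] have "g t = (\<Sum>i<k. g (real i) * poly (LP i) t)" by (rule LIMSEQ_unique)
    then show ?thesis by (simp add: Q_def poly_sum)
  qed
  show ?thesis unfolding polynomial_fun_def
    by (rule exI[of _ "degree Q"], rule exI[of _ "poly.coeff Q"]) (simp add: gQ poly_altdef)
qed

lemma avg_pow_close:
  assumes h: "h > 0" and cg: "continuous_on UNIV g"
    and close: "\<And>u. u \<in> {t..t + real k * h} \<Longrightarrow> \<bar>g u - g t\<bar> \<le> \<eta>"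
  shows "\<bar>(avg h ^^ k) g t - g t\<bar> \<le> \<eta>"
proof -
  have "\<forall>u\<in>{t..t + real (k - j) * h}. \<bar>(avg h ^^ j) g u - g t\<bar> \<le> \<eta>" if "j \<le> k" for j
    using that
  proof (induction j)
    case 0 then show ?case using close by simp
  next
    case (Suc j)
    have kj: "real (k - j) * h = real (k - Suc j) * h + h" using Suc.prems
      by (simp add: Suc_diff_Suc[symmetric] algebra_simps del: Suc_diff_Suc)
    show ?case
    proof
      fix u assume u: "u \<in> {t..t + real (k - Suc j) * h}"
      have "\<bar>avg h ((avg h ^^ j) g) u - g t\<bar> \<le> \<eta>"
        by (rule avg_range[OF h cont_avg_pow[OF h cg] _ u]) (use Suc kj in auto)
      then show "\<bar>(avg h ^^ Suc j) g u - g t\<bar> \<le> \<eta>" by simp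
    qed
  qed
  from this[of k] show ?thesis by simp
qed

lemma avg_pow_conv:
  assumes cg: "continuous_on UNIV g"
  shows "(\<lambda>n. (avg (inverse (real (Suc n))) ^^ k) g t) \<longlonglongrightarrow> g t"
proof (rule LIMSEQ_I)
  fix r :: real assume r: "r > 0"
  then have "r/2 > 0" by simp
  then obtain \<delta> where \<delta>: "\<delta> > 0" and d: "\<And>u. dist u t < \<delta> \<Longrightarrow> dist (g u) (g t) < r/2"
    using cg unfolding continuous_on_iff by blast
  have "\<delta> / (real k + 1) > 0" using \<delta> by simp
  then obtain no where no: "inverse (real (Suc no)) < \<delta> / (real k + 1)" using reals_Archimedean by blast
  show "\<exists>no. \<forall>n\<ge>no. norm ((avg (inverse (real (Suc n))) ^^ k) g t - g t) < r"
  proof (intro exI allI impI)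
    fix n assume n: "n \<ge> no"
    define h where "h = inverse (real (Suc n))"
    have h: "h > 0" unfolding h_def by simp
    have "h \<le> inverse (real (Suc no))" unfolding h_def using n by (simp add: field_simps)
    then have "h < \<delta> / (real k + 1)" using no by linarith
    then have "h * (real k + 1) < \<delta>" by (simp add: pos_less_divide_eq)
    then have kh: "real k * h < \<delta>" using h by (simp add: algebra_simps)
    have "\<bar>(avg h ^^ k) g t - g t\<bar> \<le> r/2"
    proof (rule avg_pow_close[OF h cg])
      fix u assume "u \<in> {t..t + real k * h}"
      then have "dist u t < \<delta>" using kh by (auto simp: dist_real_def)
      then show "\<bar>g u - g t\<bar> \<le> r/2" using d by (fastforce simp: dist_real_def)
    qed
    then show "norm ((avg (inverse (real (Suc n))) ^^ k) g t - g t) < r" using r unfolding h_def by simp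
  qed
qed

lemma nonpoly_dif:
  assumes cs: "continuous_on UNIV \<sigma>" and np: "\<not> polynomial_fun \<sigma>"
  shows "\<exists>h>0. \<exists>b. (dif h ^^ k) \<sigma> b \<noteq> 0"
proof (rule ccontr)
  assume "\<not> ?thesis"
  then have z: "\<And>h b. h > 0 \<Longrightarrow> (dif h ^^ k) \<sigma> b = 0" by auto
  show False
  proof (cases "k = 0")
    case True
    then have "\<sigma> t = 0" for t using z[of 1 t] by simp
    then have "polynomial_fun \<sigma>" unfolding polynomial_fun_def
      by (intro exI[of _ 0] exI[of _ "\<lambda>_. 0"]) simp
    with np show False by simp
  next
    case False
    define hs where "hs n = inverse (real (Suc n))" for n
    have hs: "hs n > 0" for n unfolding hs_def by simp
    define f where "f n t = (avg (hs n) ^^ k) \<sigma> t" for n t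
    define c where "c n m = dd (hs n) k \<sigma> m 0 / fact m" for n m
    have P: "f n t = (\<Sum>m<k. c n m * t^m)" for n t
    proof -
      obtain s where "\<bar>s\<bar> \<le> \<bar>t\<bar>" and eq: "dd (hs n) k \<sigma> 0 t =
          (\<Sum>m<k. dd (hs n) k \<sigma> m 0 / fact m * t ^ m) + dd (hs n) k \<sigma> k s / fact k * t ^ k"
        using Maclaurin_bi_le[of "dd (hs n) k \<sigma>" "dd (hs n) k \<sigma> 0" k t] deriv_dd[OF hs cs] by blast
      have "dd (hs n) k \<sigma> k s = 0" unfolding dd_def using z[OF hs] by simp
      with eq show ?thesis unfolding f_def c_def by (simp add: dd_def)
    qed
    have L: "\<And>t. (\<lambda>n. f n t) \<longlonglongrightarrow> \<sigma> t" unfolding f_def hs_def by (rule avg_pow_conv[OF cs])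
    have "polynomial_fun \<sigma>"
      by (rule poly_limit[OF _ P L]) (use False in simp)
    with np show False by simp
  qed
qed

lemma ac_pow:
  assumes cs: "continuous_on UNIV \<sigma>" and np: "\<not> polynomial_fun \<sigma>"
  shows "ac \<sigma> (\<lambda>t. t^k)"
proof -
  obtain h b where "h > 0" "(dif h ^^ k) \<sigma> b \<noteq> 0" using nonpoly_dif[OF cs np] by blast
  then show ?thesis using ac_monomial[OF cs] by blast
qed

lemma ac_exp:
  assumes cs: "continuous_on UNIV \<sigma>" and np: "\<not> polynomial_fun \<sigma>"
  shows "ac \<sigma> exp"
proof (rule ac_limit)
  fix R e :: real assume e: "e > 0"
  define R0 where "R0 = \<bar>R\<bar>"
  have "(\<lambda>n. inverse (fact n) * R0^n) \<longlonglongrightarrow> 0" by (rule summable_LIMSEQ_zero[OF summable_exp])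
  moreover have "e / exp R0 > 0" using e by simp
  ultimately have "eventually (\<lambda>n. inverse (fact n) * R0^n < e / exp R0) sequentially"
    by (rule order_tendstoD)
  then obtain N where N: "inverse (fact N) * R0^N < e / exp R0" by (auto simp: eventually_sequentially)
  define g' where "g' t = (\<Sum>m<N. (1 / fact m) * t^m)" for t :: real
  have acg: "ac \<sigma> g'" unfolding g'_def by (intro ac_sum ac_scale ac_pow cs np)
  show "\<exists>g'. ac \<sigma> g' \<and> (\<forall>t. \<bar>t\<bar> \<le> R \<longrightarrow> \<bar>exp t - g' t\<bar> < e)"
  proof (rule exI[of _ g'], intro conjI allI impI acg)
    fix t :: real assume t: "\<bar>t\<bar> \<le> R"
    obtain s where s: "\<bar>s\<bar> \<le> \<bar>t\<bar>" and eq: "exp t = (\<Sum>m<N. (t ^ m) / fact m) + (exp s / fact N) * t ^ N"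
      using Maclaurin_exp_le by blast
    have tR: "\<bar>t\<bar> \<le> R0" using t unfolding R0_def by linarith
    have "\<bar>exp t - g' t\<bar> = exp s / fact N * \<bar>t\<bar> ^ N"
      unfolding eq g'_def by (simp add: abs_mult power_abs)
    also have "\<dots> \<le> exp R0 / fact N * R0 ^ N"
      using s tR by (intro mult_mono divide_right_mono power_mono) auto
    also have "\<dots> = exp R0 * (inverse (fact N) * R0^N)" by (simp add: field_simps)
    also have "\<dots> < exp R0 * (e / exp R0)" using N by (intro mult_strict_left_mono) auto
    also have "\<dots> = e" by simp
    finally show "\<bar>exp t - g' t\<bar> < e" .
  qed
qed


definition lamr :: "nat \<Rightarrow> real" where "lamr i = inverse (real (fst (prod_decode i)) + 2)"
definition jj :: "nat \<Rightarrow> 'm::finite" where "jj i = from_nat (snd (prod_decode i))"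
definition ff :: "nat \<Rightarrow> (nat \<Rightarrow> real^'m::finite) \<Rightarrow> real" where
  "ff i x = (\<Sum>l. lamr i ^ l * x l $ jj i)"

lemma lamr: "0 < lamr i" "lamr i \<le> 1/2"
  unfolding lamr_def by (auto simp: field_simps)

lemma bs_comp: "x \<in> bounded_seqs M \<Longrightarrow> \<bar>x l $ j\<bar> \<le> M"
  unfolding bounded_seqs_def using component_le_norm_cart order_trans by blast

lemma geo_half: "summable (\<lambda>l. M * (1/2::real)^l)" "(\<Sum>l. M * (1/2::real)^l) = 2 * M"
proof -
  show "summable (\<lambda>l. M * (1/2::real)^l)" by (intro summable_mult summable_geometric) simp
  have "(\<Sum>l. M * (1/2::real)^l) = M * (\<Sum>l. (1/2::real)^l)"
    by (intro suminf_mult summable_geometric) simp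
  also have "\<dots> = 2 * M" by (subst suminf_geometric) auto
  finally show "(\<Sum>l. M * (1/2::real)^l) = 2 * M" .
qed

lemma ff_term_bound: "x \<in> bounded_seqs M \<Longrightarrow> norm (lamr i ^ l * x l $ j) \<le> M * (1/2)^l"
proof -
  assume x: "x \<in> bounded_seqs M"
  have "norm (lamr i ^ l * x l $ j) = lamr i ^ l * \<bar>x l $ j\<bar>" using lamr(1)[of i] by (simp add: abs_mult)
  also have "\<dots> \<le> (1/2)^l * M" using lamr[of i] bs_comp[OF x]
    by (intro mult_mono power_mono) auto
  finally show ?thesis by (simp add: mult.commute)
qed

lemma ff_summable: "x \<in> bounded_seqs M \<Longrightarrow> summable (\<lambda>l. lamr i ^ l * x l $ j)"
  by (rule summable_comparison_test[OF _ geo_half(1)]) (use ff_term_bound in blast)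

lemma ff_bound: "x \<in> bounded_seqs M \<Longrightarrow> \<bar>ff i x\<bar> \<le> 2 * M"
  unfolding ff_def using norm_suminf_le[OF ff_term_bound geo_half(1)] geo_half(2) by simp

lemma ff_cont: "continuous_on (bounded_seqs M) (ff i :: (nat \<Rightarrow> real^'m::finite) \<Rightarrow> real)"
proof (rule uniform_limit_theorem)
  show "uniform_limit (bounded_seqs M) (\<lambda>n x. \<Sum>l<n. lamr i ^ l * (x l :: real^'m) $ jj i) (ff i) sequentially"
    unfolding ff_def[abs_def] by (rule Weierstrass_m_test[OF ff_term_bound geo_half(1)])
  have c: "continuous_on UNIV (\<lambda>x::nat \<Rightarrow> real^'m. x l $ j)" for l and j :: 'm
    by (intro continuous_intros continuous_on_product_coordinates)
  show "\<forall>\<^sub>F n in sequentially. continuous_on (bounded_seqs M) (\<lambda>x::nat \<Rightarrow> real^'m. \<Sum>l<n. lamr i ^ l * x l $ jj i)"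
    by (intro always_eventually allI continuous_intros continuous_on_subset[OF c]) auto
qed auto

lemma lamr_jj: "lamr (prod_encode (n, to_nat (j::'m::finite))) = inverse (real n + 2)"
  "jj (prod_encode (n, to_nat j)) = j"
  unfolding lamr_def jj_def by simp_all

lemma ff_sep:
  fixes x y :: "nat \<Rightarrow> real^'m::finite"
  assumes x: "x \<in> bounded_seqs M" and y: "y \<in> bounded_seqs M" and xy: "x \<noteq> y"
  shows "\<exists>i. ff i x \<noteq> ff i y"
proof -
  obtain l0 j where l0: "x l0 $ j \<noteq> y l0 $ j" using xy by (metis ext vec_eq_iff)
  define k0 where "k0 = (LEAST k. x k $ j \<noteq> y k $ j)"
  have k0: "x k0 $ j \<noteq> y k0 $ j" unfolding k0_def by (rule LeastI[of _ l0]) (rule l0)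
  have before: "x k $ j = y k $ j" if "k < k0" for k using not_less_Least[OF that[unfolded k0_def]] by blast
  define dl where "dl k = x k $ j - y k $ j" for k
  define c0 where "c0 = \<bar>dl k0\<bar>"
  have c0: "c0 > 0" unfolding c0_def dl_def using k0 by simp
  have dlb: "\<bar>dl k\<bar> \<le> 2 * M" for k unfolding dl_def using bs_comp[OF x, of k j] bs_comp[OF y, of k j] by linarith
  have M0: "M \<ge> 0" using bs_comp[OF x, of 0 j] by linarith
  have "c0 / (4 * M + 1) > 0" using c0 M0 by simp
  then obtain n where n: "inverse (real (Suc n)) < c0 / (4 * M + 1)" using reals_Archimedean by blast
  define i where "i = prod_encode (n, to_nat j)"
  define q where "q = lamr i"
  have q: "q = inverse (real n + 2)" "0 < q" "q \<le> 1/2" unfolding q_def i_def using lamr_jj lamr by auto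
  have jji: "jj i = j" unfolding i_def by (rule lamr_jj)
  have "q \<le> inverse (real (Suc n))" unfolding q(1) by (simp add: field_simps)
  then have "q * (4*M+1) \<le> inverse (real (Suc n)) * (4*M+1)" using M0 by (intro mult_right_mono) auto
  moreover have "inverse (real (Suc n)) * (4*M+1) < c0" using n M0 by (simp add: pos_less_divide_eq)
  ultimately have qc: "q * (4 * M + 1) < c0" by linarith
  define f where "f l = q ^ l * dl l" for l
  have sx: "summable (\<lambda>l. q ^ l * x l $ j)" "summable (\<lambda>l. q ^ l * y l $ j)"
    unfolding q_def using ff_summable[OF x] ff_summable[OF y] by auto
  have fsum: "summable f" unfolding f_def dl_def using summable_diff[OF sx] by (simp add: right_diff_distrib)
  have diff: "ff i x - ff i y = suminf f"
    unfolding ff_def jji f_def dl_def q_def[symmetric] using suminf_diff[OF sx] by (simp add: right_diff_distrib)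
  have f0: "(\<Sum>l<k0. f l) = 0" unfolding f_def dl_def using before by simp
  have s1: "suminf f = (\<Sum>l. f (l + k0))" using suminf_split_initial_segment[OF fsum, of k0] f0 by simp
  define g where "g l = q ^ l * dl (l + k0)" for l
  have fg: "(\<lambda>l. f (l + k0)) = (\<lambda>l. q ^ k0 * g l)" unfolding f_def g_def by (auto simp: power_add)
  have gb: "norm (g l) \<le> 2 * M * (1/2)^l" for l
  proof -
    have "norm (g l) = q^l * \<bar>dl (l + k0)\<bar>" unfolding g_def using q by (simp add: abs_mult)
    also have "\<dots> \<le> (1/2)^l * (2 * M)" using q dlb by (intro mult_mono power_mono) auto
    finally show ?thesis by (simp add: mult.commute)
  qed
  have gsum: "summable g" by (rule summable_comparison_test[OF _ geo_half(1)[of "2*M"]]) (use gb in blast)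
  have s2: "suminf f = q ^ k0 * suminf g" unfolding s1 fg by (rule suminf_mult[OF gsum])
  define T where "T = (\<Sum>l. g (Suc l))"
  have s3: "suminf g = dl k0 + T" unfolding T_def using suminf_split_head[OF gsum] by (simp add: g_def)
  have gTb: "norm (g (Suc l)) \<le> 2 * M * q * (1/2)^l" for l
  proof -
    have "norm (g (Suc l)) = q * (q^l * \<bar>dl (Suc l + k0)\<bar>)" unfolding g_def using q by (simp add: abs_mult)
    also have "\<dots> \<le> q * ((1/2)^l * (2 * M))" using q dlb
      by (intro mult_left_mono mult_mono power_mono) auto
    finally show ?thesis by (simp add: mult_ac)
  qed
  have "norm T \<le> (\<Sum>l. 2 * M * q * (1/2)^l)" unfolding T_def by (rule norm_suminf_le[OF gTb geo_half(1)])
  also have "\<dots> = 2 * (2 * M * q)" using geo_half(2)[of "2 * M * q"] by simp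
  finally have Tb0: "\<bar>T\<bar> \<le> 2 * (2 * M * q)" by simp
  have "q * (4 * M + 1) = 2 * (2 * M * q) + q" by (simp add: algebra_simps)
  with Tb0 qc q(2) have Tb: "\<bar>T\<bar> < c0" by linarith
  have "dl k0 + T \<noteq> 0" using Tb unfolding c0_def by linarith
  then have "suminf f \<noteq> 0" unfolding s2 s3 using q by simp
  then show ?thesis using diff by (intro exI[of _ i]) simp
qed

lemma compact_bs: "compact (bounded_seqs M :: (nat \<Rightarrow> real^'m::finite) set)"
proof -
  have eq: "bounded_seqs M = (PiE UNIV (\<lambda>_. cball (0::real^'m) M))"
    unfolding bounded_seqs_def by (auto simp: PiE_def extensional_def)
  have "compactin (product_topology (\<lambda>_. euclidean) UNIV) (PiE UNIV (\<lambda>_. cball (0::real^'m) M))"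
    by (subst compactin_PiE) simp
  then show ?thesis unfolding eq euclidean_product_topology by simp
qed


definition tv :: "(nat \<Rightarrow> 'a \<Rightarrow> real) \<Rightarrow> 'a \<Rightarrow> real \<times> nat \<times> (nat \<Rightarrow> real) \<Rightarrow> real" where
  "tv F x t = (case t of (c, p, a) \<Rightarrow> c * exp (\<Sum>i<p. a i * F i x))"

definition tmul :: "real \<times> nat \<times> (nat \<Rightarrow> real) \<Rightarrow> real \<times> nat \<times> (nat \<Rightarrow> real) \<Rightarrow> real \<times> nat \<times> (nat \<Rightarrow> real)" where
  "tmul s t = (case s of (c1, p1, a1) \<Rightarrow> case t of (c2, p2, a2) \<Rightarrow>
     (c1 * c2, max p1 p2, \<lambda>i. (if i < p1 then a1 i else 0) + (if i < p2 then a2 i else 0)))"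

lemma sum_pad: fixes p q :: nat shows "p \<le> q \<Longrightarrow> (\<Sum>i<q. (if i < p then a i else 0) * G i) = (\<Sum>i<p. a i * (G i :: real))"
proof -
  assume "p \<le> q"
  then have q: "q = p + (q - p)" by simp
  show ?thesis by (subst q, unfold sum_split_nat) simp
qed

lemma tv_tmul: "tv F x (tmul s t) = tv F x s * tv F x t"
proof -
  obtain c1 p1 a1 c2 p2 a2 where st: "s = (c1, p1, a1)" "t = (c2, p2, a2)" by (cases s, cases t) auto
  have "(\<Sum>i<max p1 p2. ((if i < p1 then a1 i else 0) + (if i < p2 then a2 i else 0)) * F i x)
      = (\<Sum>i<max p1 p2. (if i < p1 then a1 i else 0) * F i x) + (\<Sum>i<max p1 p2. (if i < p2 then a2 i else 0) * F i x)"
    by (simp add: distrib_right sum.distrib)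
  also have "\<dots> = (\<Sum>i<p1. a1 i * F i x) + (\<Sum>i<p2. a2 i * F i x)"
    by (simp add: sum_pad)
  finally show ?thesis unfolding st tv_def tmul_def by (simp add: exp_add)
qed

definition prodl where "prodl ts1 ts2 = concat (map (\<lambda>s. map (tmul s) ts2) ts1)"

lemma tv_prodl: "(\<Sum>t\<leftarrow>prodl ts1 ts2. tv F x t) = (\<Sum>t\<leftarrow>ts1. tv F x t) * (\<Sum>t\<leftarrow>ts2. tv F x t)"
proof (induction ts1)
  case Nil then show ?case by (simp add: prodl_def)
next
  case (Cons s ts1)
  have "(\<Sum>t\<leftarrow>map (tmul s) ts2. tv F x t) = tv F x s * (\<Sum>t\<leftarrow>ts2. tv F x t)"
    by (induction ts2) (simp_all add: tv_tmul algebra_simps)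
  then show ?case using Cons by (simp add: prodl_def algebra_simps)
qed

definition expsum :: "(nat \<Rightarrow> 'a \<Rightarrow> real) \<Rightarrow> ('a \<Rightarrow> real) \<Rightarrow> bool" where
  "expsum F g \<longleftrightarrow> (\<exists>ts. \<forall>x. g x = (\<Sum>t\<leftarrow>ts. tv F x t))"

lemma tv_cont: assumes "\<And>i. continuous_on K (F i)" shows "continuous_on K (\<lambda>x. tv F x t)"
proof -
  obtain c p a where t: "t = (c, p, a)" by (cases t) auto
  show ?thesis unfolding t tv_def by (auto intro!: continuous_intros assms)
qed

lemma sumtv_cont: assumes "\<And>i. continuous_on K (F i)" shows "continuous_on K (\<lambda>x. \<Sum>t\<leftarrow>ts. tv F x t)"
  by (induction ts) (auto intro!: continuous_intros tv_cont assms)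

lemma sw_approx:
  fixes F :: "nat \<Rightarrow> 'a::{t2_space} \<Rightarrow> real"
  assumes K: "compact K" and cF: "\<And>i. continuous_on K (F i)"
    and sep: "\<And>x y. x \<in> K \<Longrightarrow> y \<in> K \<Longrightarrow> x \<noteq> y \<Longrightarrow> \<exists>i. F i x \<noteq> F i y"
    and cf: "continuous_on K f" and e: "e > 0"
  shows "\<exists>ts. \<forall>x\<in>K. \<bar>f x - (\<Sum>t\<leftarrow>ts. tv F x t)\<bar> < e"
proof -
  interpret function_ring_on "Collect (expsum F)" K
  proof
    show "compact K" by (rule K)
  next
    fix f assume "f \<in> Collect (expsum F)"
    then obtain ts where "\<And>x. f x = (\<Sum>t\<leftarrow>ts. tv F x t)" unfolding expsum_def by auto
    then have "f = (\<lambda>x. \<Sum>t\<leftarrow>ts. tv F x t)" by auto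
    then show "continuous_on K f" using sumtv_cont[OF cF] by simp
  next
    fix f g assume "f \<in> Collect (expsum F)" "g \<in> Collect (expsum F)"
    then obtain ts1 ts2 where "\<And>x. f x = (\<Sum>t\<leftarrow>ts1. tv F x t)" "\<And>x. g x = (\<Sum>t\<leftarrow>ts2. tv F x t)"
      unfolding expsum_def by auto
    note fg = this
    show "(\<lambda>x. f x + g x) \<in> Collect (expsum F)"
      unfolding expsum_def mem_Collect_eq by (rule exI[of _ "ts1 @ ts2"]) (simp add: fg)
    show "(\<lambda>x. f x * g x) \<in> Collect (expsum F)"
      unfolding expsum_def mem_Collect_eq by (rule exI[of _ "prodl ts1 ts2"]) (simp add: fg tv_prodl)
  next
    fix c :: real
    show "(\<lambda>_. c) \<in> Collect (expsum F)" unfolding expsum_def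
      by (auto intro!: exI[of _ "[(c, 0, \<lambda>_. 0)]"] simp: tv_def)
  next
    fix x y assume "x \<in> K" "y \<in> K" "x \<noteq> y"
    then obtain i where i: "F i x \<noteq> F i y" using sep by blast
    define t where "t = (1::real, Suc i, \<lambda>l. if l = i then 1 else (0::real))"
    have tv1: "tv F z t = exp (F i z)" for z
    proof -
      have "(\<Sum>l<Suc i. (if l = i then 1 else 0) * F l z) = F i z"
        by (simp add: if_distrib cong: if_cong)
      then show ?thesis unfolding t_def tv_def by simp
    qed
    show "\<exists>f\<in>Collect (expsum F). f x \<noteq> f y"
      by (rule bexI[of _ "\<lambda>z. tv F z t"]) (use i tv1 in \<open>auto simp: expsum_def intro!: exI[of _ "[t]"]\<close>)
  qed
  obtain G where G: "G \<in> UNIV \<rightarrow> Collect (expsum F)" and ul: "uniform_limit K G f sequentially"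
    using Stone_Weierstrass[OF cf] by blast
  from uniform_limitD[OF ul e] obtain n where n: "\<forall>x\<in>K. dist (G n x) (f x) < e"
    by (auto simp: eventually_sequentially)
  from G obtain ts where ts: "\<And>x. G n x = (\<Sum>t\<leftarrow>ts. tv F x t)" unfolding expsum_def by blast
  show ?thesis using n by (intro exI[of _ ts]) (auto simp: ts dist_real_def abs_minus_commute)
qed


definition onel :: "(real \<Rightarrow> real) \<Rightarrow> nat \<Rightarrow> ((nat \<Rightarrow> real) \<Rightarrow> real) \<Rightarrow> bool" where
  "onel \<sigma> N \<phi> \<longleftrightarrow> (\<exists>(D::nat) W c A. \<forall>v. \<phi> v = (\<Sum>h<D. A h * \<sigma> ((\<Sum>i<N. W h i * v i) + c h)))"

lemma onel_zero: "onel \<sigma> N (\<lambda>v. 0)"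
  unfolding onel_def by (rule exI[of _ 0]) simp

lemma onel_add: assumes "onel \<sigma> N \<phi>1" "onel \<sigma> N \<phi>2" shows "onel \<sigma> N (\<lambda>v. \<phi>1 v + \<phi>2 v)"
proof -
  obtain D1 :: nat and W1 c1 A1 where r1: "\<And>v. \<phi>1 v = (\<Sum>h<D1. A1 h * \<sigma> ((\<Sum>i<N. W1 h i * v i) + c1 h))"
    using assms(1) unfolding onel_def by blast
  obtain D2 :: nat and W2 c2 A2 where r2: "\<And>v. \<phi>2 v = (\<Sum>h<D2. A2 h * \<sigma> ((\<Sum>i<N. W2 h i * v i) + c2 h))"
    using assms(2) unfolding onel_def by blast
  define W where "W h = (if h < D1 then W1 h else W2 (h - D1))" for h
  define c where "c h = (if h < D1 then c1 h else c2 (h - D1))" for h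
  define A where "A h = (if h < D1 then A1 h else A2 (h - D1))" for h
  show ?thesis unfolding onel_def
  proof (rule exI[of _ "D1 + D2"], rule exI[of _ W], rule exI[of _ c], rule exI[of _ A], rule allI)
    fix v
    show "\<phi>1 v + \<phi>2 v = (\<Sum>h<D1 + D2. A h * \<sigma> ((\<Sum>i<N. W h i * v i) + c h))"
      unfolding sum_split_nat r1 r2 by (simp add: W_def c_def A_def)
  qed
qed

lemma onel_vec:
  fixes \<phi> :: "'n::finite \<Rightarrow> (nat \<Rightarrow> real) \<Rightarrow> real"
  assumes on: "\<And>j. onel \<sigma> N (\<phi> j)"
  shows "\<exists>(D::nat) W c A. \<forall>j v. \<phi> j v = (\<Sum>h<D. A j h * \<sigma> ((\<Sum>i<N. W h i * v i) + c h))"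
proof -
  have "\<exists>(D::nat) W c A. \<forall>j\<in>J. \<forall>v. \<phi> j v = (\<Sum>h<D. A j h * \<sigma> ((\<Sum>i<N. W h i * v i) + c h))"
    if "finite J" for J
    using that
  proof (induction J rule: finite_induct)
    case empty then show ?case by auto
  next
    case (insert j0 J)
    obtain D :: nat and W c A where r: "\<And>j v. j \<in> J \<Longrightarrow> \<phi> j v = (\<Sum>h<D. A j h * \<sigma> ((\<Sum>i<N. W h i * v i) + c h))"
      using insert.IH by blast
    obtain D0 :: nat and W0 c0 A0 where r0: "\<And>v. \<phi> j0 v = (\<Sum>h<D0. A0 h * \<sigma> ((\<Sum>i<N. W0 h i * v i) + c0 h))"
      using on[of j0] unfolding onel_def by blast
    define W' where "W' h = (if h < D then W h else W0 (h - D))" for h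
    define c' where "c' h = (if h < D then c h else c0 (h - D))" for h
    define A' where "A' j h = (if j = j0 then (if h < D then 0 else A0 (h - D)) else (if h < D then A j h else 0))" for j h
    show ?case
    proof (rule exI[of _ "D + D0"], rule exI[of _ W'], rule exI[of _ c'], rule exI[of _ A'], intro ballI allI)
      fix j v assume j: "j \<in> insert j0 J"
      show "\<phi> j v = (\<Sum>h<D + D0. A' j h * \<sigma> ((\<Sum>i<N. W' h i * v i) + c' h))"
      proof (cases "j = j0")
        case True then show ?thesis by (simp add: sum_split_nat r0 W'_def c'_def A'_def)
      next
        case False
        then have "j \<in> J" using j by simp
        then show ?thesis unfolding sum_split_nat r[OF \<open>j \<in> J\<close>] using False by (simp add: W'_def c'_def A'_def)
      qed
    qed
  qed
  from this[of UNIV] show ?thesis by simp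
qed

lemma mlp_of:
  fixes A :: "'n::finite \<Rightarrow> nat \<Rightarrow> real"
  shows "is_mlp \<sigma> (\<lambda>v. (\<chi> j. (\<Sum>h<D. A j h * \<sigma> ((\<Sum>i<N. W h i * v i) + c h))) :: real^'n)"
  unfolding is_mlp_def
  by (rule exI[of _ "[(N, W, c)]"], rule exI[of _ D], rule exI[of _ A], rule exI[of _ 0]) simp

lemma net_approx:
  fixes F :: "nat \<Rightarrow> 'x \<Rightarrow> real"
  assumes FB: "\<And>i x. x \<in> K \<Longrightarrow> \<bar>F i x\<bar> \<le> B" and acexp: "ac \<sigma> exp"
    and pN: "\<forall>(c,p,a)\<in>set ts. p \<le> N" and e: "e > 0"
  shows "\<exists>\<phi>. onel \<sigma> N \<phi> \<and> (\<forall>x\<in>K. \<forall>v. (\<forall>i<N. v i = F i x) \<longrightarrow> \<bar>(\<Sum>t\<leftarrow>ts. tv F x t) - \<phi> v\<bar> < e)"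
  using pN e
proof (induction ts arbitrary: e)
  case Nil then show ?case using onel_zero by (intro exI[of _ "\<lambda>v. 0"]) auto
next
  case (Cons t ts)
  obtain c p a where t: "t = (c, p, a)" by (cases t) auto
  have pN: "p \<le> N" using Cons.prems(1) t by auto
  have e2: "e/2 > 0" using Cons.prems(2) by simp
  obtain \<phi>1 where on1: "onel \<sigma> N \<phi>1" and ap1: "\<forall>x\<in>K. \<forall>v. (\<forall>i<N. v i = F i x) \<longrightarrow> \<bar>(\<Sum>t\<leftarrow>ts. tv F x t) - \<phi>1 v\<bar> < e/2"
    using Cons.IH[OF _ e2] Cons.prems(1) by auto
  define Rb where "Rb = (\<Sum>i<p. \<bar>a i\<bar>) * \<bar>B\<bar>"
  define \<eta> where "\<eta> = (e/2) / (\<bar>c\<bar> + 1)"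
  have \<eta>: "\<eta> > 0" unfolding \<eta>_def using e2 by (simp add: add_pos_nonneg)
  obtain n :: nat and \<alpha> w \<beta> where ex: "\<And>s. \<bar>s\<bar> \<le> Rb \<Longrightarrow> \<bar>exp s - (\<Sum>l<n. \<alpha> l * \<sigma> (w l * s + \<beta> l))\<bar> < \<eta>"
    by (rule acD[OF acexp \<eta>, where R=Rb]) (rule that)
  define a' where "a' i = (if i < p then a i else 0)" for i
  define \<phi>0 where "\<phi>0 v = (\<Sum>l<n. (c * \<alpha> l) * \<sigma> ((\<Sum>i<N. (w l * a' i) * v i) + \<beta> l))" for v
  have on0: "onel \<sigma> N \<phi>0" unfolding onel_def \<phi>0_def
    by (rule exI[of _ n], rule exI[of _ "\<lambda>l i. w l * a' i"], rule exI[of _ \<beta>], rule exI[of _ "\<lambda>l. c * \<alpha> l"]) simp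
  show ?case
  proof (rule exI[of _ "\<lambda>v. \<phi>0 v + \<phi>1 v"], intro conjI ballI allI impI onel_add on0 on1)
    fix x v assume x: "x \<in> K" and v: "\<forall>i<N. v i = F i x"
    define S where "S = (\<Sum>i<p. a i * F i x)"
    have Sv: "(\<Sum>i<N. a' i * v i) = S"
    proof -
      have "(\<Sum>i<N. a' i * v i) = (\<Sum>i<N. (if i < p then a i else 0) * F i x)"
        unfolding a'_def using v by (intro sum.cong refl) auto
      also have "\<dots> = S" unfolding S_def by (rule sum_pad[OF pN])
      finally show ?thesis .
    qed
    have phi0: "\<phi>0 v = c * (\<Sum>l<n. \<alpha> l * \<sigma> (w l * S + \<beta> l))"
    proof -
      have "(\<Sum>i<N. (w l * a' i) * v i) = w l * S" for l
        unfolding Sv[symmetric] sum_distrib_left by (simp add: mult.assoc)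
      then show ?thesis unfolding \<phi>0_def sum_distrib_left by (simp add: mult.assoc)
    qed
    have SR: "\<bar>S\<bar> \<le> Rb"
    proof -
      have "\<bar>S\<bar> \<le> (\<Sum>i<p. \<bar>a i * F i x\<bar>)" unfolding S_def by (rule sum_abs)
      also have "\<dots> \<le> (\<Sum>i<p. \<bar>a i\<bar> * \<bar>B\<bar>)"
      proof (rule sum_mono)
        fix i
        have "\<bar>F i x\<bar> \<le> \<bar>B\<bar>" using FB[OF x, of i] by linarith
        then show "\<bar>a i * F i x\<bar> \<le> \<bar>a i\<bar> * \<bar>B\<bar>" by (simp add: abs_mult mult_left_mono)
      qed
      finally show ?thesis unfolding Rb_def sum_distrib_right .
    qed
    have tvS: "tv F x t = c * exp S" unfolding t tv_def S_def by simp
    have "\<bar>tv F x t - \<phi>0 v\<bar> = \<bar>c * (exp S - (\<Sum>l<n. \<alpha> l * \<sigma> (w l * S + \<beta> l)))\<bar>"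
      unfolding tvS phi0 by (simp add: right_diff_distrib)
    also have "\<dots> = \<bar>c\<bar> * \<bar>exp S - (\<Sum>l<n. \<alpha> l * \<sigma> (w l * S + \<beta> l))\<bar>" by (rule abs_mult)
    also have "\<dots> \<le> \<bar>c\<bar> * \<eta>" using ex[OF SR] by (intro mult_left_mono) auto
    also have "\<dots> < e/2" unfolding \<eta>_def using e2 by (simp add: field_simps)
    finally have h0: "\<bar>tv F x t - \<phi>0 v\<bar> < e/2" .
    have h1: "\<bar>(\<Sum>t\<leftarrow>ts. tv F x t) - \<phi>1 v\<bar> < e/2" using ap1 x v by blast
    have "\<bar>(tv F x t - \<phi>0 v) + ((\<Sum>t\<leftarrow>ts. tv F x t) - \<phi>1 v)\<bar> < e"
      using h0 h1 abs_triangle_ineq[of "tv F x t - \<phi>0 v" "(\<Sum>t\<leftarrow>ts. tv F x t) - \<phi>1 v"] by linarith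
    then show "\<bar>(\<Sum>t\<leftarrow>t # ts. tv F x t) - (\<phi>0 v + \<phi>1 v)\<bar> < e" by (simp add: algebra_simps)
  qed
qed


lemma shift_bs: "x \<in> bounded_seqs M \<Longrightarrow> shift_seq k x \<in> bounded_seqs M"
  unfolding bounded_seqs_def shift_seq_def by auto

lemma ff_rec:
  fixes x :: "nat \<Rightarrow> real^'m::finite"
  assumes x: "x \<in> bounded_seqs M"
  shows "ff i (shift_seq k x) = x k $ jj i + lamr i * ff i (shift_seq (Suc k) x)"
proof -
  define f where "f l = lamr i ^ l * shift_seq k x l $ jj i" for l
  have fs: "summable f" unfolding f_def by (rule ff_summable[OF shift_bs[OF x]])
  have s2: "summable (\<lambda>l. lamr i ^ l * shift_seq (Suc k) x l $ jj i)" by (rule ff_summable[OF shift_bs[OF x]])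
  have "(\<Sum>l. f (Suc l)) = (\<Sum>l. lamr i * (lamr i ^ l * shift_seq (Suc k) x l $ jj i))"
    unfolding f_def shift_seq_def by (simp add: mult.assoc)
  also have "\<dots> = lamr i * ff i (shift_seq (Suc k) x)" unfolding ff_def by (rule suminf_mult[OF s2])
  finally have "lamr i * ff i (shift_seq (Suc k) x) = suminf f - f 0" using suminf_split_head[OF fs] by simp
  moreover have "f 0 = x k $ jj i" unfolding f_def shift_seq_def by simp
  moreover have "suminf f = ff i (shift_seq k x)" unfolding f_def ff_def ..
  ultimately show ?thesis by simp
qed

definition Hs :: "nat \<Rightarrow> (nat \<Rightarrow> real^'m::finite) \<Rightarrow> nat \<Rightarrow> nat \<Rightarrow> complex" where
  "Hs N x k i = (if i < N then complex_of_real (ff i (shift_seq k x)) else 0)"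

definition lamc :: "nat \<Rightarrow> complex" where "lamc i = complex_of_real (lamr i)"
definition Winc :: "nat \<Rightarrow> 'm::finite \<Rightarrow> complex" where "Winc i j = (if j = jj i then 1 else 0)"

lemma drive_eq: "esn_drive N Winc (\<lambda>_. 0) 1 u i = (if i < N then complex_of_real (u $ jj i) else 0)"
proof -
  have "\<And>j. Winc i j * complex_of_real (u $ j) = (if j = jj i then complex_of_real (u $ j) else 0)"
    by (simp add: Winc_def)
  then have "(\<Sum>j\<in>UNIV. Winc i j * complex_of_real (u $ j)) = complex_of_real (u $ jj i)"
    by (simp add: sum.delta)
  then show ?thesis unfolding esn_drive_def by simp
qed

lemma cmod_le_cnorm2: "i < N \<Longrightarrow> cmod (h i) \<le> cnorm2 N h"
proof -
  assume i: "i < N"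
  have "(cmod (h i))\<^sup>2 \<le> (\<Sum>l<N. (cmod (h l))\<^sup>2)" by (rule member_le_sum) (use i in auto)
  then have "sqrt ((cmod (h i))\<^sup>2) \<le> cnorm2 N h" unfolding cnorm2_def by (rule real_sqrt_le_mono)
  then show ?thesis by simp
qed

lemma Hs_solution:
  fixes x :: "nat \<Rightarrow> real^'m::finite"
  assumes x: "x \<in> bounded_seqs M"
  shows "esn_solution N lamc Winc (\<lambda>_. 0) 1 x (Hs N x)"
  unfolding esn_solution_def
proof (intro conjI allI)
  fix k i
  show "Hs N x k i = (if i < N then lamc i * Hs N x (Suc k) i else 0) + esn_drive N Winc (\<lambda>_. 0) 1 (x k) i"
    unfolding drive_eq Hs_def lamc_def by (simp add: ff_rec[OF x, of i k] add.commute)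
next
  have "cnorm2 N (Hs N x k) \<le> sqrt (real N * (2 * M)\<^sup>2)" for k
  proof -
    have "(\<Sum>i<N. (cmod (Hs N x k i))\<^sup>2) \<le> (\<Sum>i<N. (2 * M)\<^sup>2)"
    proof (rule sum_mono)
      fix i assume "i \<in> {..<N}"
      then have cm: "cmod (Hs N x k i) = \<bar>ff i (shift_seq k x)\<bar>" unfolding Hs_def by simp
      have "\<bar>ff i (shift_seq k x)\<bar> \<le> 2 * M" by (rule ff_bound[OF shift_bs[OF x]])
      then have "\<bar>ff i (shift_seq k x)\<bar>\<^sup>2 \<le> (2 * M)\<^sup>2" by (rule power_mono) simp
      then show "(cmod (Hs N x k i))\<^sup>2 \<le> (2 * M)\<^sup>2" unfolding cm .
    qed
    then show ?thesis unfolding cnorm2_def by (intro real_sqrt_le_mono) simp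
  qed
  then show "\<exists>B. \<forall>k. cnorm2 N (Hs N x k) \<le> B" by blast
qed

lemma esn_unique:
  assumes lam: "\<And>i. i < N \<Longrightarrow> cmod (lam i) \<le> 1/2"
    and h1: "esn_solution N lam Win b tau x h1" and h2: "esn_solution N lam Win b tau x h2"
  shows "h1 = h2"
proof (intro ext)
  fix k i
  obtain B1 where B1: "\<And>k. cnorm2 N (h1 k) \<le> B1" using h1 unfolding esn_solution_def by blast
  obtain B2 where B2: "\<And>k. cnorm2 N (h2 k) \<le> B2" using h2 unfolding esn_solution_def by blast
  have e1: "\<And>k i. h1 k i = (if i < N then lam i * h1 (Suc k) i else 0) + esn_drive N Win b tau (x k) i"
    using h1 unfolding esn_solution_def by blast
  have e2: "\<And>k i. h2 k i = (if i < N then lam i * h2 (Suc k) i else 0) + esn_drive N Win b tau (x k) i"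
    using h2 unfolding esn_solution_def by blast
  show "h1 k i = h2 k i"
  proof (cases "i < N")
    case False then show ?thesis using e1[of k i] e2[of k i] by simp
  next
    case True
    define d where "d n = h1 (k + n) i - h2 (k + n) i" for n
    have dn: "d 0 = lam i ^ n * d n" for n
    proof (induction n)
      case 0 then show ?case by simp
    next
      case (Suc n)
      have "d n = lam i * d (Suc n)" unfolding d_def using e1[of "k+n" i] e2[of "k+n" i] True
        by (simp add: right_diff_distrib)
      then show ?case using Suc by simp
    qed
    have C: "B1 + B2 \<ge> 0" using B1[of 0] B2[of 0] unfolding cnorm2_def by (smt (verit) real_sqrt_ge_zero sum_nonneg zero_le_power2)
    have db: "cmod (d n) \<le> B1 + B2" for n
    proof -
      have "cmod (d n) \<le> cmod (h1 (k+n) i) + cmod (h2 (k+n) i)" unfolding d_def by (rule norm_triangle_ineq4)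
      also have "\<dots> \<le> B1 + B2" using cmod_le_cnorm2[OF True, of "h1 (k+n)"] cmod_le_cnorm2[OF True, of "h2 (k+n)"] B1 B2
        by (smt (verit))
      finally show ?thesis .
    qed
    have bound: "cmod (d 0) \<le> (1/2)^n * (B1 + B2)" for n
    proof -
      have "cmod (d 0) = cmod (lam i) ^ n * cmod (d n)" using dn[of n] by (simp add: norm_mult norm_power)
      also have "\<dots> \<le> (1/2)^n * (B1 + B2)" using lam[OF True] db C by (intro mult_mono power_mono) auto
      finally show ?thesis .
    qed
    have "d 0 = 0"
    proof (rule ccontr)
      assume "d 0 \<noteq> 0"
      then have "cmod (d 0) / (B1 + B2 + 1) > 0" using C by simp
      then obtain n where n: "(1/2::real)^n < cmod (d 0) / (B1 + B2 + 1)" using real_arch_pow_inv[of _ "1/2::real"] by auto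
      have "(1/2::real)^n * (B1 + B2) \<le> (1/2)^n * (B1 + B2 + 1)" by simp
      also have "\<dots> < cmod (d 0)" using n C by (simp add: pos_less_divide_eq)
      finally show False using bound[of n] by simp
    qed
    then show ?thesis unfolding d_def by simp
  qed
qed

lemma esn_states_eq:
  fixes x :: "nat \<Rightarrow> real^'m::finite"
  assumes x: "x \<in> bounded_seqs M"
  shows "esn_states N lamc Winc (\<lambda>_. 0) 1 x = Hs N x"
  unfolding esn_states_def
proof (rule the_equality)
  show "esn_solution N lamc Winc (\<lambda>_. 0) 1 x (Hs N x)" by (rule Hs_solution[OF x])
  fix h assume hs: "esn_solution N lamc Winc (\<lambda>_. 0) 1 x h"
  have lam: "\<And>i. i < N \<Longrightarrow> cmod (lamc i) \<le> 1/2"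
  proof -
    fix i show "cmod (lamc i) \<le> 1/2" using lamr[of i] by (simp add: lamc_def)
  qed
  show "h = Hs N x" by (rule esn_unique[OF lam hs Hs_solution[OF x]])
qed

lemma esp:
  shows "echo_state_property N lamc (Winc :: nat \<Rightarrow> 'm::finite \<Rightarrow> complex) (\<lambda>_. 0) 1"
  unfolding echo_state_property_def
proof (intro allI)
  fix x :: "nat \<Rightarrow> real^'m" and h0 h0' :: "nat \<Rightarrow> complex"
  define tr where "tr h t = esn_traj N lamc Winc (\<lambda>_. 0) 1 x h t" for h t
  have dif: "tr h0 t i - tr h0' t i = lamc i ^ t * (h0 i - h0' i)" if "i < N" for t i
  proof (induction t)
    case 0 then show ?case by (simp add: tr_def)
  next
    case (Suc t)
    have "tr h0 (Suc t) i - tr h0' (Suc t) i = lamc i * (tr h0 t i - tr h0' t i)"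
      using that by (simp add: tr_def right_diff_distrib)
    then show ?case using Suc.IH by simp
  qed
  define C where "C = cnorm2 N (\<lambda>i. h0 i - h0' i)"
  have bnd: "norm (cnorm2 N (\<lambda>i. tr h0 t i - tr h0' t i)) \<le> (1/2)^t * C" for t
  proof -
    have "(\<Sum>i<N. (cmod (tr h0 t i - tr h0' t i))\<^sup>2) \<le> (\<Sum>i<N. ((1/2)^t)\<^sup>2 * (cmod (h0 i - h0' i))\<^sup>2)"
    proof (rule sum_mono)
      fix i assume "i \<in> {..<N}"
      then have "cmod (tr h0 t i - tr h0' t i) = cmod (lamc i) ^ t * cmod (h0 i - h0' i)"
        using dif by (simp add: norm_mult norm_power)
      also have "\<dots> \<le> (1/2)^t * cmod (h0 i - h0' i)"
        using lamr[of i] by (intro mult_right_mono power_mono) (auto simp: lamc_def)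
      finally show "(cmod (tr h0 t i - tr h0' t i))\<^sup>2 \<le> ((1/2)^t)\<^sup>2 * (cmod (h0 i - h0' i))\<^sup>2"
        by (simp add: power_mult_distrib[symmetric] power_mono)
    qed
    then have "cnorm2 N (\<lambda>i. tr h0 t i - tr h0' t i) \<le> sqrt (((1/2)^t)\<^sup>2 * (\<Sum>i<N. (cmod (h0 i - h0' i))\<^sup>2))"
      unfolding cnorm2_def sum_distrib_left by (rule real_sqrt_le_mono)
    also have "\<dots> = (1/2)^t * C" unfolding C_def cnorm2_def by (simp add: real_sqrt_mult)
    finally have "cnorm2 N (\<lambda>i. tr h0 t i - tr h0' t i) \<le> (1/2)^t * C" .
    moreover have "cnorm2 N (\<lambda>i. tr h0 t i - tr h0' t i) \<ge> 0" unfolding cnorm2_def by (simp add: sum_nonneg)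
    ultimately show ?thesis by simp
  qed
  have "(\<lambda>t. (1/2::real)^t * C) \<longlonglongrightarrow> 0" by (intro tendsto_mult_left_zero LIMSEQ_power_zero) simp
  have "(\<lambda>t. cnorm2 N (\<lambda>i. tr h0 t i - tr h0' t i)) \<longlonglongrightarrow> 0"
    by (rule Lim_null_comparison[OF always_eventually[OF allI[OF bnd]] \<open>(\<lambda>t. (1/2::real)^t * C) \<longlonglongrightarrow> 0\<close>])
  then show "(\<lambda>t. cnorm2 N (\<lambda>i. esn_traj N lamc Winc (\<lambda>_. 0) 1 x h0 t i - esn_traj N lamc Winc (\<lambda>_. 0) 1 x h0' t i)) \<longlonglongrightarrow> 0"
    unfolding tr_def .
qed


lemma wnorm_le: assumes "\<And>k. w k * norm (v k) \<le> B" shows "wnorm w v \<le> ereal B"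
  unfolding wnorm_def by (rule SUP_least) (use assms in simp)

lemma wnorm_ge: "ereal (w k * norm (v k)) \<le> wnorm w v"
  unfolding wnorm_def by (rule SUP_upper) simp

lemma fm_cont:
  fixes U :: "(nat \<Rightarrow> real^'m::finite) \<Rightarrow> (nat \<Rightarrow> real^'n::finite)"
  assumes fm: "fading_memory M U"
  shows "continuous_on (bounded_seqs M) (\<lambda>x. U x 0 $ j)"
proof -
  obtain w where ws: "weighting_seq w" and P: "\<And>x1 e. x1 \<in> bounded_seqs M \<Longrightarrow> e > 0 \<Longrightarrow> \<exists>d>0. \<forall>x2\<in>bounded_seqs M.
            wnorm w (\<lambda>k. x1 k - x2 k) < ereal d \<longrightarrow> wnorm w (\<lambda>k. U x1 k - U x2 k) < ereal e"
    using fm unfolding fading_memory_def by blast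
  have w: "\<And>k. 0 < w k" "\<And>k. w k \<le> 1" "w \<longlonglongrightarrow> 0" using ws unfolding weighting_seq_def by auto
  show ?thesis unfolding continuous_on_sequentially
  proof (intro allI ballI impI)
    fix xs :: "nat \<Rightarrow> nat \<Rightarrow> real^'m" and a assume a: "a \<in> bounded_seqs M"
      and H: "(\<forall>n. xs n \<in> bounded_seqs M) \<and> xs \<longlonglongrightarrow> a"
    have an: "\<And>k. norm (a k) \<le> M" using a unfolding bounded_seqs_def by blast
    have xnn: "\<And>n k. norm (xs n k) \<le> M" using H unfolding bounded_seqs_def by blast
    have M0: "M \<ge> 0" using an[of 0] norm_ge_zero[of "a 0"] by linarith
    have coord: "(\<lambda>n. xs n k) \<longlonglongrightarrow> a k" for k
    proof -
      have "continuous_on UNIV (\<lambda>x::nat \<Rightarrow> real^'m. x k)" by (rule continuous_on_product_coordinates)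
      then have "isCont (\<lambda>x::nat \<Rightarrow> real^'m. x k) a" by (metis UNIV_I continuous_on_eq_continuous_at open_UNIV)
      then show ?thesis using H isCont_tendsto_compose by blast
    qed
    show "((\<lambda>x. U x 0 $ j) \<circ> xs) \<longlonglongrightarrow> U a 0 $ j"
    proof (rule LIMSEQ_I)
      fix r :: real assume r: "r > 0"
      then have "r * w 0 > 0" using w by simp
      from P[OF a this] obtain d where d: "d > 0" and dP: "\<And>x2. x2 \<in> bounded_seqs M \<Longrightarrow>
          wnorm w (\<lambda>k. a k - x2 k) < ereal d \<Longrightarrow> wnorm w (\<lambda>k. U a k - U x2 k) < ereal (r * w 0)" by blast
      have "d / (4*M+1) > 0" using d M0 by simp
      with w(3) have "eventually (\<lambda>k. w k < d/(4*M+1)) sequentially" by (rule order_tendstoD)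
      then obtain T where T: "\<And>k. k \<ge> T \<Longrightarrow> w k < d/(4*M+1)" by (auto simp: eventually_sequentially)
      have "d/2 > 0" using d by simp
      then have "eventually (\<lambda>n. \<forall>k\<in>{..<T}. dist (xs n k) (a k) < d/2) sequentially"
        by (intro eventually_ball_finite ballI tendstoD[OF coord]) auto
      then obtain N0 where N0: "\<And>n k. n \<ge> N0 \<Longrightarrow> k < T \<Longrightarrow> dist (xs n k) (a k) < d/2"
        by (auto simp: eventually_sequentially)
      show "\<exists>no. \<forall>n\<ge>no. norm (((\<lambda>x. U x 0 $ j) \<circ> xs) n - U a 0 $ j) < r"
      proof (intro exI allI impI)
        fix n assume n: "n \<ge> N0"
        have xn: "xs n \<in> bounded_seqs M" using H by blast
        have "w k * norm (a k - xs n k) \<le> d/2" for k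
        proof (cases "k < T")
          case True
          have nl: "norm (a k - xs n k) < d/2" using N0[OF n True] by (simp add: dist_norm norm_minus_commute)
          have "w k * norm (a k - xs n k) \<le> 1 * norm (a k - xs n k)" using w(1,2)[of k] by (intro mult_right_mono) auto
          then show ?thesis using nl by simp
        next
          case False
          have "norm (a k - xs n k) \<le> norm (a k) + norm (xs n k)" by (rule norm_triangle_ineq4)
          also have "\<dots> \<le> 2 * M" using an[of k] xnn[of n k] by linarith
          finally have nb: "norm (a k - xs n k) \<le> 2 * M" .
          have "w k * norm (a k - xs n k) \<le> d/(4*M+1) * (2*M)"
            using T[of k] False w(1)[of k] nb by (intro mult_mono) auto
          also have "\<dots> \<le> d/2" using d M0 by (simp add: field_simps)
          finally show ?thesis .
        qed
        then have "wnorm w (\<lambda>k. a k - xs n k) \<le> ereal (d/2)" by (rule wnorm_le)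
        also have "\<dots> < ereal d" using d by simp
        finally have wl: "wnorm w (\<lambda>k. a k - xs n k) < ereal d" .
        have lt: "wnorm w (\<lambda>k. U a k - U (xs n) k) < ereal (r * w 0)" by (rule dP[OF xn wl])
        have ge: "ereal (w 0 * norm (U a 0 - U (xs n) 0)) \<le> wnorm w (\<lambda>k. U a k - U (xs n) k)" by (rule wnorm_ge)
        have "ereal (w 0 * norm (U a 0 - U (xs n) 0)) < ereal (r * w 0)" using order.strict_trans1[OF ge lt] .
        then have "w 0 * norm (U a 0 - U (xs n) 0) < r * w 0" by simp
        then have "norm (U a 0 - U (xs n) 0) < r" using w(1)[of 0] by (simp add: mult.commute)
        moreover have "\<bar>(U (xs n) 0 - U a 0) $ j\<bar> \<le> norm (U (xs n) 0 - U a 0)" by (rule component_le_norm_cart)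
        ultimately show "norm (((\<lambda>x. U x 0 $ j) \<circ> xs) n - U a 0 $ j) < r" by (simp add: norm_minus_commute)
      qed
    qed
  qed
qed


theorem corollary1:
  fixes U :: "(nat \<Rightarrow> real^'m) \<Rightarrow> (nat \<Rightarrow> real^'n)"
    and M \<epsilon> :: real
    and \<sigma> :: "real \<Rightarrow> real"
  assumes "M > 0"
    and "continuous_on UNIV \<sigma>" and "\<not> polynomial_fun \<sigma>"
    and "causal_filter M U" and "time_invariant_filter M U" and "fading_memory M U"
    and "\<epsilon> > 0"
  shows "\<exists>N (lam :: nat \<Rightarrow> complex) (Win :: nat \<Rightarrow> 'm \<Rightarrow> complex) (b :: nat \<Rightarrow> complex) tau
            (f :: (nat \<Rightarrow> real) \<Rightarrow> real^'n).
           0 < tau \<and> tau \<le> 1 \<and> (\<forall>i<N. cmod (lam i) < 1) \<and>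
           echo_state_property N lam Win b tau \<and> is_mlp \<sigma> f \<and>
           (SUP x\<in>bounded_seqs M. supnorm (\<lambda>k. U x k - paral_filter N lam Win b tau f x k))
             < ereal \<epsilon>"
proof -
  define K where "K = (bounded_seqs M :: (nat \<Rightarrow> real^'m) set)"
  define C where "C = real CARD('n)"
  have C: "C \<ge> 1" unfolding C_def by simp
  define \<epsilon>' where "\<epsilon>' = \<epsilon> / (4 * C)"
  have \<epsilon>': "\<epsilon>' > 0" using assms(7) C unfolding \<epsilon>'_def by simp
  have "\<forall>j. \<exists>ts. \<forall>x\<in>K. \<bar>U x 0 $ j - (\<Sum>t\<leftarrow>ts. tv ff x t)\<bar> < \<epsilon>'"
  proof
    fix j :: 'n
    show "\<exists>ts. \<forall>x\<in>K. \<bar>U x 0 $ j - (\<Sum>t\<leftarrow>ts. tv ff x t)\<bar> < \<epsilon>'"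
      unfolding K_def by (rule sw_approx[OF compact_bs ff_cont ff_sep fm_cont[OF assms(6)] \<epsilon>'])
  qed
  from choice[OF this] obtain TS where TS0: "\<forall>j. \<forall>x\<in>K. \<bar>U x 0 $ j - (\<Sum>t\<leftarrow>TS j. tv ff x t)\<bar> < \<epsilon>'" by blast
  have TS: "\<And>j x. x \<in> K \<Longrightarrow> \<bar>U x 0 $ j - (\<Sum>t\<leftarrow>TS j. tv ff x t)\<bar> < \<epsilon>'" using TS0 by blast
  define N where "N = (\<Sum>j\<in>UNIV. sum_list (map (\<lambda>t. fst (snd t)) (TS j)))"
  have pN: "\<forall>(c,p,a)\<in>set (TS j). p \<le> N" for j
  proof (intro ballI, clarify)
    fix c p a assume t: "(c, p, a) \<in> set (TS j)"
    have "p \<in> set (map (\<lambda>t. fst (snd t)) (TS j))" using t by force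
    then have "p \<le> sum_list (map (\<lambda>t. fst (snd t)) (TS j))" by (rule member_le_sum_list) auto
    also have "\<dots> \<le> N" unfolding N_def by (rule member_le_sum) auto
    finally show "p \<le> N" .
  qed
  have acexp: "ac \<sigma> exp" by (rule ac_exp[OF assms(2,3)])
  have FB: "\<And>i x. x \<in> K \<Longrightarrow> \<bar>ff i x\<bar> \<le> 2 * M" unfolding K_def by (rule ff_bound)
  have "\<forall>j. \<exists>\<phi>. onel \<sigma> N \<phi> \<and> (\<forall>x\<in>K. \<forall>v. (\<forall>i<N. v i = ff i x) \<longrightarrow> \<bar>(\<Sum>t\<leftarrow>TS j. tv ff x t) - \<phi> v\<bar> < \<epsilon>')"
  proof
    fix j show "\<exists>\<phi>. onel \<sigma> N \<phi> \<and> (\<forall>x\<in>K. \<forall>v. (\<forall>i<N. v i = ff i x) \<longrightarrow> \<bar>(\<Sum>t\<leftarrow>TS j. tv ff x t) - \<phi> v\<bar> < \<epsilon>')"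
      by (rule net_approx[OF FB acexp pN[of j] \<epsilon>'])
  qed
  from choice[OF this] obtain \<Phi> where \<Phi>0: "\<forall>j. onel \<sigma> N (\<Phi> j) \<and> (\<forall>x\<in>K. \<forall>v. (\<forall>i<N. v i = ff i x) \<longrightarrow> \<bar>(\<Sum>t\<leftarrow>TS j. tv ff x t) - \<Phi> j v\<bar> < \<epsilon>')"
    by blast
  have \<Phi>on: "\<And>j. onel \<sigma> N (\<Phi> j)" using \<Phi>0 by blast
  have \<Phi>ap: "\<And>j x v. x \<in> K \<Longrightarrow> (\<forall>i<N. v i = ff i x) \<Longrightarrow> \<bar>(\<Sum>t\<leftarrow>TS j. tv ff x t) - \<Phi> j v\<bar> < \<epsilon>'"
    using \<Phi>0 by blast
  obtain D :: nat and W c A where rep: "\<And>(j::'n) v. \<Phi> j v = (\<Sum>h<D. A j h * \<sigma> ((\<Sum>i<N. W h i * v i) + c h))"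
    using onel_vec[where \<phi>=\<Phi>, OF \<Phi>on] by blast
  define f where "f = (\<lambda>v. (\<chi> j. (\<Sum>h<D. A j h * \<sigma> ((\<Sum>i<N. W h i * v i) + c h))) :: real^'n)"
  have mlp: "is_mlp \<sigma> f" unfolding f_def by (rule mlp_of)
  have main: "norm (U x k - paral_filter N lamc Winc (\<lambda>_. 0) 1 f x k) \<le> \<epsilon>/2" if x: "x \<in> K" for x k
  proof -
    have xb: "x \<in> bounded_seqs M" using x unfolding K_def .
    have sk: "shift_seq k x \<in> K" using shift_bs[OF xb] unfolding K_def .
    have Uk: "U x k = U (shift_seq k x) 0"
    proof (cases "k = 0")
      case True then show ?thesis by (simp add: shift_seq_def)
    next
      case False
      then have "U (shift_seq k x) = shift_seq k (U x)" using assms(5) xb unfolding time_invariant_filter_def by auto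
      then show ?thesis by (simp add: shift_seq_def)
    qed
    define v where "v = realify N (Hs N x k)"
    have pf: "paral_filter N lamc Winc (\<lambda>_. 0) 1 f x k = f v"
      unfolding paral_filter_def v_def esn_states_eq[OF xb] ..
    have vi: "\<forall>i<N. v i = ff i (shift_seq k x)" unfolding v_def realify_def Hs_def by simp
    have comp: "\<bar>(U x k - f v) $ j\<bar> \<le> 2 * \<epsilon>'" for j
    proof -
      have fv: "f v $ j = \<Phi> j v" unfolding f_def rep by simp
      have a1: "\<bar>U (shift_seq k x) 0 $ j - (\<Sum>t\<leftarrow>TS j. tv ff (shift_seq k x) t)\<bar> < \<epsilon>'" by (rule TS[OF sk])
      have a2: "\<bar>(\<Sum>t\<leftarrow>TS j. tv ff (shift_seq k x) t) - \<Phi> j v\<bar> < \<epsilon>'" by (rule \<Phi>ap[OF sk vi])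
      have "\<bar>(U x k - f v) $ j\<bar> = \<bar>(U (shift_seq k x) 0 $ j - (\<Sum>t\<leftarrow>TS j. tv ff (shift_seq k x) t))
            + ((\<Sum>t\<leftarrow>TS j. tv ff (shift_seq k x) t) - \<Phi> j v)\<bar>" by (simp add: Uk fv)
      also have "\<dots> \<le> \<bar>U (shift_seq k x) 0 $ j - (\<Sum>t\<leftarrow>TS j. tv ff (shift_seq k x) t)\<bar>
            + \<bar>(\<Sum>t\<leftarrow>TS j. tv ff (shift_seq k x) t) - \<Phi> j v\<bar>" by (rule abs_triangle_ineq)
      finally show ?thesis using a1 a2 by linarith
    qed
    have "norm (U x k - f v) \<le> (\<Sum>j\<in>UNIV. \<bar>(U x k - f v) $ j\<bar>)" by (rule norm_le_l1_cart)
    also have "\<dots> \<le> (\<Sum>j\<in>(UNIV::'n set). 2 * \<epsilon>')" by (intro sum_mono comp)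
    also have "\<dots> = \<epsilon>/2" unfolding \<epsilon>'_def C_def using C_def C by (simp add: field_simps)
    finally show ?thesis unfolding pf .
  qed
  have lam1: "\<forall>i<N. cmod (lamc i) < 1"
  proof (intro allI impI)
    fix i show "cmod (lamc i) < 1" using lamr[of i] by (simp add: lamc_def)
  qed
  have sup: "(SUP x\<in>bounded_seqs M. supnorm (\<lambda>k. U x k - paral_filter N lamc Winc (\<lambda>_. 0) 1 f x k)) < ereal \<epsilon>"
  proof -
    have "(SUP x\<in>bounded_seqs M. supnorm (\<lambda>k. U x k - paral_filter N lamc Winc (\<lambda>_. 0) 1 f x k)) \<le> ereal (\<epsilon>/2)"
    proof (rule SUP_least)
      fix x :: "nat \<Rightarrow> real^'m" assume "x \<in> bounded_seqs M"
      then have "x \<in> K" unfolding K_def .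
      then show "supnorm (\<lambda>k. U x k - paral_filter N lamc Winc (\<lambda>_. 0) 1 f x k) \<le> ereal (\<epsilon>/2)"
        unfolding supnorm_def using main by (intro SUP_least) simp
    qed
    also have "\<dots> < ereal \<epsilon>" using assms(7) by simp
    finally show ?thesis .
  qed
  show ?thesis
    by (rule exI[of _ N], rule exI[of _ lamc], rule exI[of _ Winc], rule exI[of _ "\<lambda>_. 0"], rule exI[of _ 1],
        rule exI[of _ f]) (use lam1 esp mlp sup in simp)
qed


end
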